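(* Let $\mathcal Z$ be a data space with distribution $\xi$, $\mathcal W$ a parameter space, $\ell:\mathcal W\times\mathcal Z\to\mathbb R$ a loss function, and $P_{W|Z_{[n]}}$ a learning algorithm (Markov kernel from $\mathcal Z^n$ to $\mathcal W$). In the supersample construction described in the context, for each $i=1,\dots,n$ let $(\tilde W_i,\tilde R_i)$ be a decoupled pair of $(W,R_i)$ conditioned on $Z_i^\pm$, and set $\tilde G_i=\tilde R_i\big(\ell(\tilde W_i,Z_i^-)-\ell(\tilde W_i,Z_i^+)\big)$. Then $$\mathrm{gen}(\xi,P_{W|Z_{[n]}})\le \frac1n\sum_{i=1}^n \mathbb E\Big[\Psi^{*-1}_{\tilde G_i|Z_i^\pm}\big(I_{Z_i^\pm}(W;R_i)\big)\Big]\le \frac1n\sum_{i=1}^n \bar\psi^{*-1}_{\tilde G_i|Z_i^\pm}\big(I(W;R_i\mid Z_i^\pm)\big).$$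
   Context: Population loss $L_\xi(w)=\int_{\mathcal Z}\ell(w,z)\,\xi(dz)$; empirical loss $L_{Z_{[n]}}(w)=\frac1n\sum_{i=1}^n\ell(w,Z_i)$; the generalization error is $\mathrm{gen}(\xi,P_{W|Z_{[n]}})=\mathbb E[L_\xi(W)-L_{Z_{[n]}}(W)]$, where $Z_1,\dots,Z_n$ are i.i.d. $\xi$ and $W\sim P_{W|Z_{[n]}}$ given $Z_{[n]}=(Z_1,\dots,Z_n)$. Supersample construction: $Z_i^{s}$, $s\in\{-1,+1\}$, $i=1,\dots,n$, are $2n$ i.i.d. samples from $\xi$; write $Z_i^-=Z_i^{-1}$, $Z_i^+=Z_i^{+1}$, $Z_i^\pm=(Z_i^-,Z_i^+)$, $Z^\pm_{[n]}=(Z_1^\pm,\dots,Z_n^\pm)$; $R_1,\dots,R_n$ are i.i.d. uniform on $\{-1,1\}$ (Rademacher), independent of the supersample; $W$ is the output of $P_{W|Z_{[n]}}$ on the training vector $(Z_1^{R_1},\dots,Z_n^{R_n})$. A decoupled pair of $(X,Y)$ conditioned on $U$ is a pair $(\tilde X,\tilde Y)$ (jointly defined with $U$) with $(\tilde X,U)\overset{D}{=}(X,U)$, $(\tilde Y,U)\overset{D}{=}(Y,U)$ and $\tilde X - U - \tilde Y$ a Markov chain. Sample-conditioned mutual information: $I_u(X;Y)=I(X;Y\mid U=u)$, and $I_U(X;Y)$ is this function evaluated at the random $U$ (so $\mathbb E[I_U(X;Y)]=I(X;Y|U)$); mutual information is in nats. For random variables $F,U$: $\psi_{F|U}(\lambda,u)=\ln\mathbb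 E[e^{\lambda(F-\mathbb E[F|U=u])}\mid U=u]$, $\psi^{*-1}_{F|U}(\eta,u)=\inf_{\lambda>0}\frac{\eta+\psi_{F|U}(\lambda,u)}{\lambda}$ for $\eta\ge0$; $\Psi_{F|U}(\lambda)=\psi_{F|U}(\lambda,U)$, $\Psi^{*-1}_{F|U}(\eta)=\psi^{*-1}_{F|U}(\eta,U)$ (random); $\bar\psi_{F|U}(\lambda)=\mathbb E[\Psi_{F|U}(\lambda)]$ and $\bar\psi^{*-1}_{F|U}(\eta)=\inf_{\lambda>0}\frac{\eta+\bar\psi_{F|U}(\lambda)}{\lambda}$. *)

theory Defs
  imports "HOL-Probability.Probability"
begin

definition eln :: "ennreal \<Rightarrow> ereal" where
  "eln x = (if x = \<infinity> then \<infinity> else if x = 0 then -\<infinity> else ereal (ln (enn2real x)))"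

definition eexp :: "'a measure \<Rightarrow> ('a \<Rightarrow> ereal) \<Rightarrow> ereal" where
  "eexp M f = enn2ereal (\<integral>\<^sup>+ x. e2ennreal (f x) \<partial>M) - enn2ereal (\<integral>\<^sup>+ x. e2ennreal (- f x) \<partial>M)"

definition kl_div :: "'a measure \<Rightarrow> 'a measure \<Rightarrow> ereal" where
  "kl_div P Q =
     (if absolutely_continuous Q P
      then eexp Q (\<lambda>x. let f = enn2real (RN_deriv Q P x) in ereal (f * ln f))
      else \<infinity>)"

definition mutual_info :: "'a measure \<Rightarrow> 'b measure \<Rightarrow> ('a \<times> 'b) measure \<Rightarrow> ereal" where
  "mutual_info M N P = kl_div P (distr P M fst \<Otimes>\<^sub>M distr P N snd)"

text \<open>Conditional CGF \<psi>_{F|U}(\<lambda>,u), given the conditional law LF of F given U = u.\<close>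
definition cgf :: "real measure \<Rightarrow> real \<Rightarrow> ereal" where
  "cgf LF t = (let m = (\<integral>x. x \<partial>LF) in eln (\<integral>\<^sup>+ x. ennreal (exp (t * (x - m))) \<partial>LF))"

text \<open>Generalised inverse of the convex conjugate: inf over \<lambda> > 0 of (\<eta> + \<psi>(\<lambda>)) / \<lambda>.\<close>
definition inv_conj :: "(real \<Rightarrow> ereal) \<Rightarrow> ereal \<Rightarrow> ereal" where
  "inv_conj \<psi> \<eta> = (INF t\<in>{0<..}. (\<eta> + \<psi> t) / ereal t)"

definition rad :: "int measure" where
  "rad = measure_pmf (pmf_of_set {-1, 1})"

text \<open>Training vector (Z_1^{R_1},...,Z_n^{R_n}); indices are 0,...,n-1;
  Z_i^- = fst, Z_i^+ = snd.\<close>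
definition train :: "nat \<Rightarrow> (nat \<Rightarrow> 'z \<times> 'z) \<Rightarrow> (nat \<Rightarrow> int) \<Rightarrow> nat \<Rightarrow> 'z" where
  "train n zs rs = (\<lambda>i. if i < n then (if rs i = 1 then snd (zs i) else fst (zs i)) else undefined)"

definition joint_ZW :: "'z measure \<Rightarrow> 'w measure \<Rightarrow> ((nat \<Rightarrow> 'z) \<Rightarrow> 'w measure) \<Rightarrow> nat
    \<Rightarrow> ((nat \<Rightarrow> 'z) \<times> 'w) measure" where
  "joint_ZW \<xi> MW K n =
     PiM {..<n} (\<lambda>_. \<xi>) \<bind> (\<lambda>zs. K zs \<bind> (\<lambda>w. return (PiM {..<n} (\<lambda>_. \<xi>) \<Otimes>\<^sub>M MW) (zs, w)))"

definition pop_loss :: "'z measure \<Rightarrow> ('w \<Rightarrow> 'z \<Rightarrow> real) \<Rightarrow> 'w \<Rightarrow> real" where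
  "pop_loss \<xi> loss w = (\<integral>z. loss w z \<partial>\<xi>)"

definition emp_loss :: "nat \<Rightarrow> ('w \<Rightarrow> 'z \<Rightarrow> real) \<Rightarrow> (nat \<Rightarrow> 'z) \<Rightarrow> 'w \<Rightarrow> real" where
  "emp_loss n loss zs w = (\<Sum>i<n. loss w (zs i)) / real n"

definition gen :: "'z measure \<Rightarrow> 'w measure \<Rightarrow> ((nat \<Rightarrow> 'z) \<Rightarrow> 'w measure) \<Rightarrow> nat
    \<Rightarrow> ('w \<Rightarrow> 'z \<Rightarrow> real) \<Rightarrow> real" where
  "gen \<xi> MW K n loss =
     (\<integral>p. pop_loss \<xi> loss (snd p) - emp_loss n loss (fst p) (snd p) \<partial>joint_ZW \<xi> MW K n)"

text \<open>Conditional law of (W, R_i) given Z_i^\<pm> = u in the supersample construction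
  (the supersample pair at index i is fixed to u, everything else is integrated out).\<close>
definition cond_WR :: "'z measure \<Rightarrow> 'w measure \<Rightarrow> ((nat \<Rightarrow> 'z) \<Rightarrow> 'w measure) \<Rightarrow> nat
    \<Rightarrow> nat \<Rightarrow> 'z \<times> 'z \<Rightarrow> ('w \<times> int) measure" where
  "cond_WR \<xi> MW K n i u =
     (PiM {..<n} (\<lambda>_. \<xi> \<Otimes>\<^sub>M \<xi>) \<Otimes>\<^sub>M PiM {..<n} (\<lambda>_. rad)) \<bind>
       (\<lambda>(zs, rs). K (train n (zs(i := u)) rs) \<bind> (\<lambda>w. return (MW \<Otimes>\<^sub>M rad) (w, rs i)))"

definition cmi_pt :: "'z measure \<Rightarrow> 'w measure \<Rightarrow> ((nat \<Rightarrow> 'z) \<Rightarrow> 'w measure) \<Rightarrow> nat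
    \<Rightarrow> nat \<Rightarrow> 'z \<times> 'z \<Rightarrow> ereal" where
  "cmi_pt \<xi> MW K n i u = mutual_info MW rad (cond_WR \<xi> MW K n i u)"

definition cmi :: "'z measure \<Rightarrow> 'w measure \<Rightarrow> ((nat \<Rightarrow> 'z) \<Rightarrow> 'w measure) \<Rightarrow> nat
    \<Rightarrow> nat \<Rightarrow> ereal" where
  "cmi \<xi> MW K n i = eexp (\<xi> \<Otimes>\<^sub>M \<xi>) (cmi_pt \<xi> MW K n i)"

text \<open>Conditional law of the decoupled pair (W~_i, R~_i) given Z_i^\<pm> = u:
  product of the conditional marginals of W and R_i (conditional independence).\<close>
definition decoupled :: "'z measure \<Rightarrow> 'w measure \<Rightarrow> ((nat \<Rightarrow> 'z) \<Rightarrow> 'w measure) \<Rightarrow> nat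
    \<Rightarrow> nat \<Rightarrow> 'z \<times> 'z \<Rightarrow> ('w \<times> int) measure" where
  "decoupled \<xi> MW K n i u =
     (let P = cond_WR \<xi> MW K n i u in distr P MW fst \<Otimes>\<^sub>M distr P rad snd)"

definition law_G :: "'z measure \<Rightarrow> 'w measure \<Rightarrow> ((nat \<Rightarrow> 'z) \<Rightarrow> 'w measure) \<Rightarrow> nat
    \<Rightarrow> ('w \<Rightarrow> 'z \<Rightarrow> real) \<Rightarrow> nat \<Rightarrow> 'z \<times> 'z \<Rightarrow> real measure" where
  "law_G \<xi> MW K n loss i u =
     distr (decoupled \<xi> MW K n i u) borel
       (\<lambda>(w, r). real_of_int r * (loss w (fst u) - loss w (snd u)))"

end

theory Submission
  imports Defs
begin


lemma enn2ereal_fin: "x \<noteq> \<infinity> \<Longrightarrow> enn2ereal x = ereal (enn2real x)"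
  by (cases x rule: ennreal_cases) auto

lemma eexp_lower:
  fixes L \<phi> :: "'a \<Rightarrow> real"
  assumes L: "integrable Q L" and phi[measurable]: "\<phi> \<in> borel_measurable Q"
    and le: "\<And>x. x \<in> space Q \<Longrightarrow> L x \<le> \<phi> x"
  shows "ereal (integral\<^sup>L Q L) \<le> eexp Q (\<lambda>x. ereal (\<phi> x))"
proof -
  have neg: "(\<integral>\<^sup>+ x. ennreal (- \<phi> x) \<partial>Q) \<le> (\<integral>\<^sup>+ x. ennreal (- L x) \<partial>Q)"
    by (intro nn_integral_mono) (auto intro!: ennreal_leI simp: le)
  have Lfin: "(\<integral>\<^sup>+ x. ennreal (- L x) \<partial>Q) \<noteq> \<infinity>"
    using L unfolding real_integrable_def by auto
  with neg have negfin: "(\<integral>\<^sup>+ x. ennreal (- \<phi> x) \<partial>Q) \<noteq> \<infinity>"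
    by (metis infinity_ennreal_def neq_top_trans)
  have eq: "eexp Q (\<lambda>x. ereal (\<phi> x)) = enn2ereal (\<integral>\<^sup>+ x. ennreal (\<phi> x) \<partial>Q) - enn2ereal (\<integral>\<^sup>+ x. ennreal (- \<phi> x) \<partial>Q)"
    unfolding eexp_def by simp
  show ?thesis
  proof (cases "(\<integral>\<^sup>+ x. ennreal (\<phi> x) \<partial>Q) = \<infinity>")
    case True
    have "eexp Q (\<lambda>x. ereal (\<phi> x)) = \<infinity>"
      unfolding eq True enn2ereal_fin[OF negfin] by simp
    then show ?thesis by simp
  next
    case False
    then have int: "integrable Q \<phi>" using negfin unfolding real_integrable_def by auto
    have "integral\<^sup>L Q L \<le> integral\<^sup>L Q \<phi>"
      using L int le by (intro integral_mono) auto
    also have "integral\<^sup>L Q \<phi> = enn2real (\<integral>\<^sup>+ x. ennreal (\<phi> x) \<partial>Q) - enn2real (\<integral>\<^sup>+ x. ennreal (- \<phi> x) \<partial>Q)"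
      using int by (rule real_lebesgue_integral_def)
    finally show ?thesis unfolding eq enn2ereal_fin[OF negfin] enn2ereal_fin[OF False] by simp
  qed
qed

lemma young_ineq:
  fixes f y :: real assumes "0 \<le> f"
  shows "f * y \<le> f * ln f - f + exp y"
proof (cases "f = 0")
  case True then show ?thesis by simp
next
  case False
  then have fp: "f > 0" using assms by simp
  have "1 + (y - ln f) \<le> exp (y - ln f)" by (rule exp_ge_add_one_self)
  also have "exp (y - ln f) = exp y / f" using fp by (simp add: exp_diff)
  finally have "f * (1 + (y - ln f)) \<le> exp y" using fp by (simp add: field_simps)
  then show ?thesis by (simp add: algebra_simps)
qed

lemma DV:
  fixes h :: "'a \<Rightarrow> real" and z :: real
  assumes P: "prob_space P" and Q: "prob_space Q" and sets: "sets P = sets Q"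
    and h[measurable]: "h \<in> borel_measurable Q" and hint: "integrable P h"
    and Z: "(\<integral>\<^sup>+ x. ennreal (exp (h x)) \<partial>Q) = ennreal z" and zpos: "z > 0"
  shows "ereal (integral\<^sup>L P h) \<le> kl_div P Q + ereal (ln z)"
proof (cases "absolutely_continuous Q P")
  case False
  then show ?thesis unfolding kl_div_def by simp
next
  case ac: True
  interpret Q: prob_space Q by fact
  interpret P: prob_space P by fact
  define f where "f x = enn2real (RN_deriv Q P x)" for x
  have fm[measurable]: "f \<in> borel_measurable Q" unfolding f_def by measurable
  have f0: "\<And>x. 0 \<le> f x" unfolding f_def by simp
  have "density Q (RN_deriv Q P) = P"
    using ac sets by (intro Q.density_RN_deriv) auto
  moreover have "density Q (RN_deriv Q P) = density Q (\<lambda>x. ennreal (f x))"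
  proof (rule density_cong)
    show "AE x in Q. RN_deriv Q P x = ennreal (f x)"
      using Q.RN_deriv_finite[OF P.sigma_finite_measure_axioms ac sets]
      by eventually_elim (auto simp: f_def ennreal_enn2real_if less_top)
  qed auto
  ultimately have dens: "P = density Q (\<lambda>x. ennreal (f x))" by simp
  have intP: "integrable P g \<longleftrightarrow> integrable Q (\<lambda>x. f x * g x)" if [measurable]: "g \<in> borel_measurable Q" for g :: "'a \<Rightarrow> real"
    unfolding dens by (subst integrable_density) (auto simp: f0)
  have integP: "integral\<^sup>L P g = integral\<^sup>L Q (\<lambda>x. f x * g x)" if [measurable]: "g \<in> borel_measurable Q" for g :: "'a \<Rightarrow> real"
    unfolding dens by (subst integral_density) (auto simp: f0)
  have fint: "integrable Q f" using intP[of "\<lambda>_. 1"] by simp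
  have f1: "integral\<^sup>L Q f = 1" using integP[of "\<lambda>_. 1"] P.prob_space by simp
  have fhint: "integrable Q (\<lambda>x. f x * h x)" using intP[of h] hint by simp
  have fh: "integral\<^sup>L P h = integral\<^sup>L Q (\<lambda>x. f x * h x)" using integP[of h] by simp
  define c where "c = ln z"
  define e where "e x = exp (h x - c)" for x
  have em[measurable]: "e \<in> borel_measurable Q" unfolding e_def by measurable
  have e_eq: "e x = exp (h x) / z" for x unfolding e_def c_def using zpos by (simp add: exp_diff)
  have enn: "(\<integral>\<^sup>+ x. ennreal (e x) \<partial>Q) = 1"
  proof -
    have "(\<integral>\<^sup>+ x. ennreal (e x) \<partial>Q) = (\<integral>\<^sup>+ x. ennreal (exp (h x)) * ennreal (1 / z) \<partial>Q)"
      unfolding e_eq using zpos by (intro nn_integral_cong) (simp add: ennreal_mult[symmetric] divide_inverse)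
    also have "\<dots> = ennreal z * ennreal (1 / z)"
      by (subst nn_integral_multc) (auto simp: Z)
    also have "\<dots> = 1" using zpos by (simp add: ennreal_mult[symmetric])
    finally show ?thesis .
  qed
  have eint: "integrable Q e"
    using enn unfolding real_integrable_def e_def
    by (auto simp: ennreal_neg)
  have e1: "integral\<^sup>L Q e = 1"
    using enn by (subst integral_eq_nn_integral) (auto simp: e_def)
  define L where "L x = f x * (h x - c) + f x - e x" for x
  have Lint: "integrable Q L" unfolding L_def
    using fhint fint eint by (auto simp: right_diff_distrib intro!: Bochner_Integration.integrable_diff Bochner_Integration.integrable_add integrable_mult_left)
  have "integral\<^sup>L Q L = integral\<^sup>L Q (\<lambda>x. f x * h x) - c * integral\<^sup>L Q f + integral\<^sup>L Q f - integral\<^sup>L Q e"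
    unfolding L_def using fhint fint eint
    by (simp add: right_diff_distrib Bochner_Integration.integral_diff Bochner_Integration.integral_add
          Bochner_Integration.integrable_diff Bochner_Integration.integrable_add integrable_mult_left mult.commute[of _ c])
  also have "\<dots> = integral\<^sup>L P h - c" using f1 e1 fh by simp
  finally have Leq: "integral\<^sup>L Q L = integral\<^sup>L P h - c" .
  have "ereal (integral\<^sup>L Q L) \<le> eexp Q (\<lambda>x. ereal (f x * ln (f x)))"
  proof (rule eexp_lower[OF Lint])
    show "(\<lambda>x. f x * ln (f x)) \<in> borel_measurable Q" by measurable
    fix x show "L x \<le> f x * ln (f x)"
      unfolding L_def e_def using young_ineq[OF f0[of x], of "h x - c"] by simp
  qed
  also have "\<dots> = kl_div P Q" unfolding kl_div_def using ac by (simp add: f_def Let_def)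
  finally have "ereal (integral\<^sup>L P h - c) \<le> kl_div P Q" using Leq by simp
  then show ?thesis unfolding c_def
    by (cases "kl_div P Q") auto
qed

lemma nn_integral_subadd_meas:
  assumes g[measurable]: "g \<in> borel_measurable M"
  shows "(\<integral>\<^sup>+x. f x + g x \<partial>M) \<le> (\<integral>\<^sup>+x. f x \<partial>M) + (\<integral>\<^sup>+x. g x \<partial>M)"
  unfolding nn_integral_def_finite[of M "\<lambda>x. f x + g x"]
proof (rule SUP_least, clarify)
  fix s assume s: "simple_function M s" "s \<le> (\<lambda>x. f x + g x)" "\<forall>x. s x < top"
  have sm[measurable]: "s \<in> borel_measurable M" using s(1) by (rule borel_measurable_simple_function)
  have le1: "s x - g x \<le> f x" for x
  proof -
    have "s x \<le> f x + g x" "s x < top" using s(2,3) by (auto simp: le_fun_def)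
    then show ?thesis by (simp add: leI less_diff_eq_ennreal)
  qed
  have "integral\<^sup>S M s = (\<integral>\<^sup>+x. s x \<partial>M)" using s(1) by (simp add: nn_integral_eq_simple_integral)
  also have "\<dots> \<le> (\<integral>\<^sup>+x. (s x - g x) + g x \<partial>M)"
    by (intro nn_integral_mono) (auto simp: diff_add_self_ennreal)
  also have "\<dots> = (\<integral>\<^sup>+x. s x - g x \<partial>M) + (\<integral>\<^sup>+x. g x \<partial>M)"
    by (intro nn_integral_add) auto
  also have "\<dots> \<le> (\<integral>\<^sup>+x. f x \<partial>M) + (\<integral>\<^sup>+x. g x \<partial>M)"
    by (intro add_mono nn_integral_mono le1) auto
  finally show "integral\<^sup>S M s \<le> (\<integral>\<^sup>+x. f x \<partial>M) + (\<integral>\<^sup>+x. g x \<partial>M)" .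
qed

lemma enn2real_integrable_AE:
  assumes p[measurable]: "p \<in> borel_measurable M" and fin: "(\<integral>\<^sup>+x. p x \<partial>M) \<noteq> \<infinity>"
  shows "integrable M (\<lambda>x. enn2real (p x))" and "(\<integral>x. enn2real (p x) \<partial>M) = enn2real (\<integral>\<^sup>+x. p x \<partial>M)"
proof -
  have ae: "AE x in M. p x \<noteq> \<infinity>" using nn_integral_PInf_AE[OF p fin] by simp
  have eq: "(\<integral>\<^sup>+x. ennreal (enn2real (p x)) \<partial>M) = (\<integral>\<^sup>+x. p x \<partial>M)"
    using ae by (intro nn_integral_cong_AE) (auto simp: ennreal_enn2real_if less_top)
  show "integrable M (\<lambda>x. enn2real (p x))"
    using fin eq by (intro integrableI_nonneg) (auto simp: less_top)
  show "(\<integral>x. enn2real (p x) \<partial>M) = enn2real (\<integral>\<^sup>+x. p x \<partial>M)"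
    using eq by (subst integral_eq_nn_integral) auto
qed
lemma integral_bind_int:
  fixes f :: "'b \<Rightarrow> real"
  assumes N[measurable]: "N \<in> measurable M (prob_algebra B)" and f[measurable]: "f \<in> borel_measurable B"
    and M: "prob_space M" and int: "integrable (M \<bind> N) f"
  shows "integrable M (\<lambda>x. \<integral>y. f y \<partial>N x)" and "integral\<^sup>L (M \<bind> N) f = (\<integral>x. \<integral>y. f y \<partial>N x \<partial>M)"
proof -
  have N'[measurable]: "N \<in> measurable M (subprob_algebra B)" using N by (rule measurable_prob_algebraD)
  interpret prob_space M by fact
  define p where "p x = (\<integral>\<^sup>+y. ennreal (f y) \<partial>N x)" for x
  define q where "q x = (\<integral>\<^sup>+y. ennreal (- f y) \<partial>N x)" for x
  have pm[measurable]: "p \<in> borel_measurable M" unfolding p_def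
    by (rule measurable_compose[OF N' nn_integral_measurable_subprob_algebra]) measurable
  have qm[measurable]: "q \<in> borel_measurable M" unfolding q_def
    by (rule measurable_compose[OF N' nn_integral_measurable_subprob_algebra]) measurable
  have bp: "(\<integral>\<^sup>+y. ennreal (f y) \<partial>(M \<bind> N)) = (\<integral>\<^sup>+x. p x \<partial>M)"
    unfolding p_def by (rule nn_integral_bind[OF _ N']) measurable
  have bq: "(\<integral>\<^sup>+y. ennreal (- f y) \<partial>(M \<bind> N)) = (\<integral>\<^sup>+x. q x \<partial>M)"
    unfolding q_def by (rule nn_integral_bind[OF _ N']) measurable
  have pf: "(\<integral>\<^sup>+x. p x \<partial>M) \<noteq> \<infinity>" and qf: "(\<integral>\<^sup>+x. q x \<partial>M) \<noteq> \<infinity>"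
    using int unfolding real_integrable_def bp bq by auto
  have aep: "AE x in M. p x \<noteq> \<infinity>" using nn_integral_PInf_AE[OF pm pf] by simp
  have aeq: "AE x in M. q x \<noteq> \<infinity>" using nn_integral_PInf_AE[OF qm qf] by simp
  have ae: "AE x in M. (\<integral>y. f y \<partial>N x) = enn2real (p x) - enn2real (q x)"
    using AE_space aep aeq
  proof eventually_elim
    case (elim x)
    show ?case
    proof -
      have x: "x \<in> space M" using elim by simp
      have sx: "sets (N x) = sets B" using measurable_space[OF N' x] by (simp add: space_subprob_algebra)
      have fx[measurable]: "f \<in> borel_measurable (N x)" using sx by (simp cong: measurable_cong_sets)
      have "integrable (N x) f" using elim unfolding real_integrable_def p_def q_def by auto
      then show ?thesis unfolding p_def q_def by (rule real_lebesgue_integral_def)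
    qed
  qed
  have ip: "integrable M (\<lambda>x. enn2real (p x))" and ipe: "(\<integral>x. enn2real (p x) \<partial>M) = enn2real (\<integral>\<^sup>+x. p x \<partial>M)"
    using enn2real_integrable_AE[OF pm pf] by auto
  have iq: "integrable M (\<lambda>x. enn2real (q x))" and iqe: "(\<integral>x. enn2real (q x) \<partial>M) = enn2real (\<integral>\<^sup>+x. q x \<partial>M)"
    using enn2real_integrable_AE[OF qm qf] by auto
  have im[measurable]: "(\<lambda>x. \<integral>y. f y \<partial>N x) \<in> borel_measurable M"
    by (rule measurable_compose[OF N' integral_measurable_subprob_algebra]) measurable
  show "integrable M (\<lambda>x. \<integral>y. f y \<partial>N x)"
    using ip iq ae by (subst integrable_cong_AE[OF im _ ae]) (auto intro: Bochner_Integration.integrable_diff)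
  have "(\<integral>x. \<integral>y. f y \<partial>N x \<partial>M) = (\<integral>x. enn2real (p x) - enn2real (q x) \<partial>M)"
    using ae by (intro integral_cong_AE) auto
  also have "\<dots> = enn2real (\<integral>\<^sup>+x. p x \<partial>M) - enn2real (\<integral>\<^sup>+x. q x \<partial>M)"
    using ip iq ipe iqe by (simp add: Bochner_Integration.integral_diff)
  also have "\<dots> = integral\<^sup>L (M \<bind> N) f"
    using real_lebesgue_integral_def[OF int] bp bq by simp
  finally show "integral\<^sup>L (M \<bind> N) f = (\<integral>x. \<integral>y. f y \<partial>N x \<partial>M)" ..
qed


lemma rad_prob: "prob_space rad" unfolding rad_def by (rule prob_space_measure_pmf)
lemma sets_rad[simp, measurable_cong]: "sets rad = UNIV" unfolding rad_def by simp
lemma space_rad[simp]: "space rad = UNIV" unfolding rad_def by simp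

locale setting =
  fixes \<xi> :: "'z measure" and MW :: "'w measure"
    and K :: "(nat \<Rightarrow> 'z) \<Rightarrow> 'w measure" and loss :: "'w \<Rightarrow> 'z \<Rightarrow> real" and n :: nat
  assumes xi: "prob_space \<xi>"
    and npos: "n > 0"
    and Km[measurable]: "K \<in> measurable (PiM {..<n} (\<lambda>_. \<xi>)) (prob_algebra MW)"
    and lossm: "(\<lambda>(w, z). loss w z) \<in> borel_measurable (MW \<Otimes>\<^sub>M \<xi>)"
begin

abbreviation "X2 \<equiv> \<xi> \<Otimes>\<^sub>M \<xi>"
abbreviation "Pn \<equiv> PiM {..<n} (\<lambda>_. \<xi>)"
abbreviation "Zs \<equiv> PiM {..<n} (\<lambda>_. X2)"
abbreviation "Rs \<equiv> PiM {..<n} (\<lambda>_. rad)"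
abbreviation "AA \<equiv> Zs \<Otimes>\<^sub>M Rs"

lemma loss_meas[measurable (raw)]:
  assumes "f \<in> M \<rightarrow>\<^sub>M MW" "g \<in> M \<rightarrow>\<^sub>M \<xi>"
  shows "(\<lambda>x. loss (f x) (g x)) \<in> borel_measurable M"
  using measurable_compose[OF measurable_Pair[OF assms] lossm] by simp

lemma train_meas:
  assumes zf[measurable]: "zf \<in> M \<rightarrow>\<^sub>M Zs" and rf[measurable]: "rf \<in> M \<rightarrow>\<^sub>M Rs"
  shows "(\<lambda>x. train n (zf x) (rf x)) \<in> M \<rightarrow>\<^sub>M Pn"
proof -
  have "(\<lambda>x j. train n (zf x) (rf x) j) \<in> M \<rightarrow>\<^sub>M Pn"
  proof (rule measurable_PiM_single')
    fix j assume j: "j \<in> {..<n}"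
    have [measurable]: "(\<lambda>x. zf x j) \<in> M \<rightarrow>\<^sub>M X2"
      using measurable_compose[OF zf measurable_component_singleton[OF j]] by simp
    have [measurable]: "(\<lambda>x. rf x j) \<in> M \<rightarrow>\<^sub>M rad"
      using measurable_compose[OF rf measurable_component_singleton[OF j]] by simp
    have "(\<lambda>x. if rf x j = 1 then snd (zf x j) else fst (zf x j)) \<in> M \<rightarrow>\<^sub>M \<xi>"
      by measurable
    then show "(\<lambda>x. train n (zf x) (rf x) j) \<in> M \<rightarrow>\<^sub>M \<xi>"
      using j by (simp add: train_def)
  next
    show "(\<lambda>x j. train n (zf x) (rf x) j) \<in> space M \<rightarrow> (\<Pi>\<^sub>E i\<in>{..<n}. space \<xi>)"
    proof
      fix x assume x: "x \<in> space M"
      have "zf x \<in> space Zs" "rf x \<in> space Rs" using x zf rf by (auto simp: measurable_def)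
      then show "(\<lambda>j. train n (zf x) (rf x) j) \<in> (\<Pi>\<^sub>E i\<in>{..<n}. space \<xi>)"
        by (auto simp: train_def space_PiM PiE_iff space_pair_measure extensional_def mem_Times_iff)
    qed
  qed
  then show ?thesis by simp
qed

end

context setting begin

lemma X2_prob: "prob_space X2" using xi by (intro prob_space_pair)
lemma Pn_prob: "prob_space Pn" using xi by (intro prob_space_PiM)
lemma Zs_prob: "prob_space Zs" using X2_prob by (intro prob_space_PiM)
lemma Rs_prob: "prob_space Rs" using rad_prob by (intro prob_space_PiM)
lemma AA_prob: "prob_space AA" using Zs_prob Rs_prob by (intro prob_space_pair)

definition tr :: "nat \<Rightarrow> ('z \<times> 'z) \<times> (nat \<Rightarrow> 'z \<times> 'z) \<times> (nat \<Rightarrow> int) \<Rightarrow> nat \<Rightarrow> 'z" where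
  "tr i = (\<lambda>(u, a). train n ((fst a)(i := u)) (snd a))"

lemma tr_meas[measurable]: assumes i: "i < n" shows "tr i \<in> X2 \<Otimes>\<^sub>M AA \<rightarrow>\<^sub>M Pn"
proof -
  have "(\<lambda>x. (fst (snd x)) (i := fst x)) \<in> X2 \<Otimes>\<^sub>M AA \<rightarrow>\<^sub>M Zs"
    by (rule measurable_fun_upd[where J="{..<n}"]) (use i in auto)
  then have "(\<lambda>x. train n ((fst (snd x)) (i := fst x)) (snd (snd x))) \<in> X2 \<Otimes>\<^sub>M AA \<rightarrow>\<^sub>M Pn"
    by (intro train_meas) auto
  then show ?thesis unfolding tr_def by (simp add: case_prod_beta')
qed

lemma kap_meas[measurable]: assumes i: "i < n" shows "(\<lambda>x. K (tr i x)) \<in> X2 \<Otimes>\<^sub>M AA \<rightarrow>\<^sub>M prob_algebra MW"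
  using measurable_compose[OF tr_meas[OF i] Km] by simp

lemma K_prob: assumes "x \<in> space Pn" shows "prob_space (K x)" "sets (K x) = sets MW"
  using measurable_space[OF Km assms] by (auto simp: space_prob_algebra)

lemma tr_space: assumes "i < n" "x \<in> space (X2 \<Otimes>\<^sub>M AA)" shows "tr i x \<in> space Pn"
  using measurable_space[OF tr_meas[OF assms(1)] assms(2)] .

lemma cond_WR_eq:
  assumes i: "i < n" and u: "u \<in> space X2"
  shows "cond_WR \<xi> MW K n i u = AA \<bind> (\<lambda>a. distr (K (tr i (u, a))) (MW \<Otimes>\<^sub>M rad) (\<lambda>w. (w, snd a i)))"
  unfolding cond_WR_def
proof (rule bind_cong)
  fix a assume a: "a \<in> space AA"
  have sp: "tr i (u, a) \<in> space Pn" using tr_space[OF i] u a by (simp add: space_pair_measure)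
  have ne: "space (K (tr i (u, a))) \<noteq> {}" using K_prob[OF sp] prob_space.not_empty by blast
  have ms: "(\<lambda>w. (w, snd a i)) \<in> K (tr i (u, a)) \<rightarrow>\<^sub>M MW \<Otimes>\<^sub>M rad"
    using K_prob(2)[OF sp] by (simp cong: measurable_cong_sets)
  show "(case a of (zs, rs) \<Rightarrow> K (train n (zs(i := u)) rs) \<bind> (\<lambda>w. return (MW \<Otimes>\<^sub>M rad) (w, rs i))) =
        distr (K (tr i (u, a))) (MW \<Otimes>\<^sub>M rad) (\<lambda>w. (w, snd a i))"
    using bind_return_distr'[OF ne ms] by (cases a) (simp add: tr_def)
qed simp

lemma cond_WR_meas[measurable]:
  assumes i: "i < n" shows "cond_WR \<xi> MW K n i \<in> X2 \<rightarrow>\<^sub>M prob_algebra (MW \<Otimes>\<^sub>M rad)"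
proof -
  have "(\<lambda>u. AA \<bind> (\<lambda>a. distr (K (tr i (u, a))) (MW \<Otimes>\<^sub>M rad) (\<lambda>w. (w, snd a i)))) \<in> X2 \<rightarrow>\<^sub>M prob_algebra (MW \<Otimes>\<^sub>M rad)"
  proof (rule measurable_bind_prob_space2)
    show "(\<lambda>x. AA) \<in> X2 \<rightarrow>\<^sub>M prob_algebra AA"
      using AA_prob by (intro measurable_const) (simp add: space_prob_algebra)
    show "(\<lambda>(x, y). distr (K (tr i (x, y))) (MW \<Otimes>\<^sub>M rad) (\<lambda>w. (w, snd y i))) \<in> X2 \<Otimes>\<^sub>M AA \<rightarrow>\<^sub>M prob_algebra (MW \<Otimes>\<^sub>M rad)"
    proof -
      have "(\<lambda>x. distr (K (tr i x)) (MW \<Otimes>\<^sub>M rad) (\<lambda>w. (w, snd (snd x) i))) \<in> X2 \<Otimes>\<^sub>M AA \<rightarrow>\<^sub>M prob_algebra (MW \<Otimes>\<^sub>M rad)"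
        using i by (intro measurable_distr_prob_space2[OF kap_meas[OF i]]) measurable
      then show ?thesis by (simp add: case_prod_beta')
    qed
  qed
  then show ?thesis
    by (rule measurable_cong[THEN iffD1, rotated]) (simp add: cond_WR_eq[OF i])
qed

end


lemma set_pmf_rad: "set_pmf (pmf_of_set {-1, 1::int}) = {-1, 1}"
  by (simp add: set_pmf_of_set)

lemma rad_nn: "(\<integral>\<^sup>+r. f r \<partial>rad) = f (-1) * ennreal (1/2) + f 1 * ennreal (1/2)"
  unfolding rad_def
  by (subst nn_integral_measure_pmf_finite) (auto simp: set_pmf_rad pmf_of_set)

lemma rad_int: fixes f :: "int \<Rightarrow> real" shows "(\<integral>r. f r \<partial>rad) = (f (-1) + f 1) / 2"
  unfolding rad_def by (subst integral_measure_pmf[of "{-1,1}"]) (auto simp: set_pmf_rad pmf_of_set field_simps)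

lemma rad_AE: "AE r in rad. r \<in> {-1, 1}"
  unfolding rad_def AE_measure_pmf_iff set_pmf_rad by simp

lemma rad_integrable: fixes f :: "int \<Rightarrow> real" shows "integrable rad f"
  unfolding rad_def by (rule integrable_measure_pmf_finite) (simp add: set_pmf_rad)

lemma distr_pair_snd_prob:
  assumes "prob_space N" "sigma_finite_measure M" shows "distr (N \<Otimes>\<^sub>M M) M snd = M"
proof (intro measure_eqI)
  interpret prob_space N by fact
  interpret M: sigma_finite_measure M by fact
  fix A assume A: "A \<in> sets (distr (N \<Otimes>\<^sub>M M) M snd)"
  from A have "emeasure (distr (N \<Otimes>\<^sub>M M) M snd) A = emeasure (N \<Otimes>\<^sub>M M) (space N \<times> A)"
    by (auto simp add: emeasure_distr space_pair_measure dest: sets.sets_into_space intro!: arg_cong2[where f=emeasure])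
  also have "\<dots> = emeasure N (space N) * emeasure M A"
    using A by (intro M.emeasure_pair_measure_Times) auto
  finally show "emeasure (distr (N \<Otimes>\<^sub>M M) M snd) A = emeasure M A"
    by (simp add: emeasure_space_1)
qed simp

context setting begin

lemma rs_comp_meas[measurable]: assumes i: "i < n" shows "(\<lambda>a. snd a i) \<in> AA \<rightarrow>\<^sub>M rad"
  using measurable_compose[OF measurable_snd measurable_component_singleton[of i "{..<n}" "\<lambda>_. rad"]] i by simp

lemma P_facts:
  assumes i: "i < n" and u: "u \<in> space X2"
  shows "prob_space (cond_WR \<xi> MW K n i u)" "sets (cond_WR \<xi> MW K n i u) = sets (MW \<Otimes>\<^sub>M rad)"
  using measurable_space[OF cond_WR_meas[OF i] u] by (auto simp: space_prob_algebra)

lemma P_rad: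
  assumes i: "i < n" and u: "u \<in> space X2"
  shows "distr (cond_WR \<xi> MW K n i u) rad snd = rad"
proof -
  have kern: "(\<lambda>a. distr (K (tr i (u, a))) (MW \<Otimes>\<^sub>M rad) (\<lambda>w. (w, snd a i))) \<in> AA \<rightarrow>\<^sub>M subprob_algebra (MW \<Otimes>\<^sub>M rad)"
  proof -
    have "(\<lambda>(x, y). distr (K (tr i (x, y))) (MW \<Otimes>\<^sub>M rad) (\<lambda>w. (w, snd y i))) \<in> X2 \<Otimes>\<^sub>M AA \<rightarrow>\<^sub>M prob_algebra (MW \<Otimes>\<^sub>M rad)"
    proof -
      have "(\<lambda>x. distr (K (tr i x)) (MW \<Otimes>\<^sub>M rad) (\<lambda>w. (w, snd (snd x) i))) \<in> X2 \<Otimes>\<^sub>M AA \<rightarrow>\<^sub>M prob_algebra (MW \<Otimes>\<^sub>M rad)"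
        using i by (intro measurable_distr_prob_space2[OF kap_meas[OF i]]) measurable
      then show ?thesis by (simp add: case_prod_beta')
    qed
    then have "(\<lambda>a. (\<lambda>(x, y). distr (K (tr i (x, y))) (MW \<Otimes>\<^sub>M rad) (\<lambda>w. (w, snd y i))) (u, a)) \<in> AA \<rightarrow>\<^sub>M prob_algebra (MW \<Otimes>\<^sub>M rad)"
      using u by (rule measurable_Pair2)
    then show ?thesis by (auto intro: measurable_prob_algebraD)
  qed
  have ne: "space AA \<noteq> {}" using AA_prob prob_space.not_empty by blast
  have "distr (cond_WR \<xi> MW K n i u) rad snd = AA \<bind> (\<lambda>a. distr (distr (K (tr i (u, a))) (MW \<Otimes>\<^sub>M rad) (\<lambda>w. (w, snd a i))) rad snd)"
    unfolding cond_WR_eq[OF i u] by (rule distr_bind[OF kern ne]) simp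
  also have "\<dots> = AA \<bind> (\<lambda>a. return rad (snd a i))"
  proof (rule bind_cong[OF refl])
    fix a assume a: "a \<in> space AA"
    have sp: "tr i (u, a) \<in> space Pn" using tr_space[OF i] u a by (simp add: space_pair_measure)
    interpret Kp: prob_space "K (tr i (u, a))" using K_prob[OF sp] by simp
    have ms: "(\<lambda>w. (w, snd a i)) \<in> K (tr i (u, a)) \<rightarrow>\<^sub>M MW \<Otimes>\<^sub>M rad"
      using K_prob(2)[OF sp] by (simp cong: measurable_cong_sets)
    show "distr (distr (K (tr i (u, a))) (MW \<Otimes>\<^sub>M rad) (\<lambda>w. (w, snd a i))) rad snd = return rad (snd a i)"
      by (subst distr_distr) (auto simp: ms comp_def)
  qed
  also have "\<dots> = distr AA rad (\<lambda>a. snd a i)"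
    by (rule bind_return_distr'[OF ne]) (rule rs_comp_meas[OF i])
  also have "\<dots> = distr (distr AA Rs snd) rad (\<lambda>r. r i)"
    using i by (subst distr_distr) (auto simp: comp_def intro!: measurable_component_singleton)
  also have "distr AA Rs snd = Rs" using Zs_prob Rs_prob by (intro distr_pair_snd_prob prob_space_imp_sigma_finite)
  also have "distr Rs rad (\<lambda>r. r i) = rad"
    using i by (intro distr_PiM_component) (auto simp: rad_prob)
  finally show ?thesis .
qed

end


lemma cosh_ge1: fixes a :: real shows "1 \<le> (exp a + exp (- a)) / 2"
proof -
  have p: "exp a > 0" by simp
  have "0 \<le> (exp a - 1)^2 / exp a" by simp
  also have "(exp a - 1)^2 / exp a = exp a + exp (-a) - 2"
    using p by (simp add: field_simps power2_eq_square exp_minus)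
  finally show ?thesis by simp
qed

lemma rad_half: fixes a t :: real
  shows "ennreal (exp (t * (real_of_int (-1) * a))) * ennreal (1/2) + ennreal (exp (t * (real_of_int 1 * a))) * ennreal (1/2)
    = ennreal (exp (t * a) / 2 + exp (- (t * a)) / 2)"
proof -
  have "ennreal (exp (t * (real_of_int (-1) * a))) * ennreal (1/2) = ennreal (exp (t * (real_of_int (-1) * a)) * (1/2))"
    by (rule ennreal_mult[symmetric]) auto
  also have "\<dots> = ennreal (exp (- (t * a)) / 2)" by simp
  finally have 1: "ennreal (exp (t * (real_of_int (-1) * a))) * ennreal (1/2) = ennreal (exp (- (t * a)) / 2)" .
  have "ennreal (exp (t * (real_of_int 1 * a))) * ennreal (1/2) = ennreal (exp (t * (real_of_int 1 * a)) * (1/2))"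
    by (rule ennreal_mult[symmetric]) auto
  also have "\<dots> = ennreal (exp (t * a) / 2)" by simp
  finally have 2: "ennreal (exp (t * (real_of_int 1 * a))) * ennreal (1/2) = ennreal (exp (t * a) / 2)" .
  show ?thesis unfolding 1 2 by (simp add: ennreal_plus[symmetric] del: ennreal_plus)
qed

context setting begin

definition Wd :: "nat \<Rightarrow> 'z \<times> 'z \<Rightarrow> 'w measure" where
  "Wd i u = distr (cond_WR \<xi> MW K n i u) MW fst"

lemma Wd_facts: assumes i: "i < n" and u: "u \<in> space X2"
  shows "prob_space (Wd i u)" "sets (Wd i u) = sets MW"
proof -
  interpret P: prob_space "cond_WR \<xi> MW K n i u" using P_facts[OF i u] by simp
  have "fst \<in> cond_WR \<xi> MW K n i u \<rightarrow>\<^sub>M MW"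
    using P_facts(2)[OF i u] by (simp cong: measurable_cong_sets)
  then show "prob_space (Wd i u)" unfolding Wd_def by (rule P.prob_space_distr)
  show "sets (Wd i u) = sets MW" unfolding Wd_def by simp
qed

lemma dec_eq: assumes i: "i < n" and u: "u \<in> space X2"
  shows "decoupled \<xi> MW K n i u = Wd i u \<Otimes>\<^sub>M rad"
  unfolding decoupled_def Wd_def Let_def P_rad[OF i u] ..

lemma dec_facts: assumes i: "i < n" and u: "u \<in> space X2"
  shows "prob_space (decoupled \<xi> MW K n i u)" "sets (decoupled \<xi> MW K n i u) = sets (MW \<Otimes>\<^sub>M rad)"
  unfolding dec_eq[OF i u] using Wd_facts[OF i u] rad_prob
  by (auto intro!: prob_space_pair sets_pair_measure_cong)

lemma cmi_pt_eq: "cmi_pt \<xi> MW K n i u = kl_div (cond_WR \<xi> MW K n i u) (decoupled \<xi> MW K n i u)"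
  unfolding cmi_pt_def mutual_info_def decoupled_def Let_def ..

lemma u_space: assumes "u \<in> space X2" shows "fst u \<in> space \<xi>" "snd u \<in> space \<xi>"
  using assms by (auto simp: space_pair_measure)

lemma Gm[measurable]: assumes u: "u \<in> space X2"
  shows "(\<lambda>(w, r). real_of_int r * (loss w (fst u) - loss w (snd u))) \<in> borel_measurable (MW \<Otimes>\<^sub>M rad)"
proof -
  have [measurable]: "(\<lambda>x. fst u) \<in> MW \<Otimes>\<^sub>M rad \<rightarrow>\<^sub>M \<xi>" "(\<lambda>x. snd u) \<in> MW \<Otimes>\<^sub>M rad \<rightarrow>\<^sub>M \<xi>"
    using u_space[OF u] by auto
  have r: "(\<lambda>x. real_of_int (snd x)) \<in> borel_measurable (MW \<Otimes>\<^sub>M rad)"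
  proof (rule measurable_compose[OF measurable_snd])
    show "real_of_int \<in> borel_measurable rad"
      by (subst measurable_cong_sets[of rad "count_space UNIV"]) auto
  qed
  have l1: "(\<lambda>x. loss (fst x) (fst u)) \<in> borel_measurable (MW \<Otimes>\<^sub>M rad)"
    by (rule loss_meas) auto
  have l2: "(\<lambda>x. loss (fst x) (snd u)) \<in> borel_measurable (MW \<Otimes>\<^sub>M rad)"
    by (rule loss_meas) auto
  have "(\<lambda>x. real_of_int (snd x) * (loss (fst x) (fst u) - loss (fst x) (snd u))) \<in> borel_measurable (MW \<Otimes>\<^sub>M rad)"
    using r l1 l2 by measurable
  then show ?thesis by (simp add: case_prod_beta')
qed

lemma law_G_mean:
  assumes i: "i < n" and u: "u \<in> space X2"
  shows "(\<integral>x. x \<partial>law_G \<xi> MW K n loss i u) = 0"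
proof -
  let ?G = "\<lambda>(w, r). real_of_int r * (loss w (fst u) - loss w (snd u))"
  interpret W: prob_space "Wd i u" using Wd_facts[OF i u] by simp
  interpret R: prob_space rad by (rule rad_prob)
  interpret WR: pair_sigma_finite "Wd i u" rad ..
  have Gm': "?G \<in> borel_measurable (Wd i u \<Otimes>\<^sub>M rad)"
    using Gm[OF u] Wd_facts(2)[OF i u] by (simp cong: measurable_cong_sets)
  have "(\<integral>x. x \<partial>law_G \<xi> MW K n loss i u) = integral\<^sup>L (Wd i u \<Otimes>\<^sub>M rad) ?G"
    unfolding law_G_def dec_eq[OF i u] by (subst integral_distr[OF Gm']) auto
  also have "\<dots> = 0"
  proof (cases "integrable (Wd i u \<Otimes>\<^sub>M rad) ?G")
    case True
    have "integral\<^sup>L (Wd i u \<Otimes>\<^sub>M rad) ?G = (\<integral>w. \<integral>r. ?G (w, r) \<partial>rad \<partial>Wd i u)"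
      using WR.integral_fst'[OF True] by simp
    also have "\<dots> = 0" by (simp add: rad_int)
    finally show ?thesis .
  qed (simp add: not_integrable_integral_eq)
  finally show ?thesis .
qed

lemma law_G_nn:
  assumes i: "i < n" and u: "u \<in> space X2"
  shows "(\<integral>\<^sup>+x. ennreal (exp (t * x)) \<partial>law_G \<xi> MW K n loss i u) =
    (\<integral>\<^sup>+w. ennreal (exp (t * (loss w (fst u) - loss w (snd u))) / 2 + exp (- (t * (loss w (fst u) - loss w (snd u)))) / 2) \<partial>Wd i u)"
proof -
  let ?G = "\<lambda>(w, r). real_of_int r * (loss w (fst u) - loss w (snd u))"
  interpret W: prob_space "Wd i u" using Wd_facts[OF i u] by simp
  interpret R: prob_space rad by (rule rad_prob)
  have Gm': "?G \<in> borel_measurable (Wd i u \<Otimes>\<^sub>M rad)"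
    using Gm[OF u] Wd_facts(2)[OF i u] by (simp cong: measurable_cong_sets)
  have "(\<integral>\<^sup>+x. ennreal (exp (t * x)) \<partial>law_G \<xi> MW K n loss i u) = (\<integral>\<^sup>+x. ennreal (exp (t * ?G x)) \<partial>(Wd i u \<Otimes>\<^sub>M rad))"
    unfolding law_G_def dec_eq[OF i u] by (subst nn_integral_distr[OF Gm']) auto
  also have "\<dots> = (\<integral>\<^sup>+w. \<integral>\<^sup>+r. ennreal (exp (t * ?G (w, r))) \<partial>rad \<partial>Wd i u)"
    using Gm' by (subst R.nn_integral_fst[symmetric]) auto
  also have "\<dots> = (\<integral>\<^sup>+w. ennreal (exp (t * (loss w (fst u) - loss w (snd u))) / 2 + exp (- (t * (loss w (fst u) - loss w (snd u)))) / 2) \<partial>Wd i u)"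
    by (intro nn_integral_cong) (simp only: rad_nn case_prod_conv rad_half)
  finally show ?thesis .
qed

lemma law_G_nn_ge1:
  assumes i: "i < n" and u: "u \<in> space X2"
  shows "1 \<le> (\<integral>\<^sup>+x. ennreal (exp (t * x)) \<partial>law_G \<xi> MW K n loss i u)"
proof -
  interpret W: prob_space "Wd i u" using Wd_facts[OF i u] by simp
  have "1 = (\<integral>\<^sup>+w. 1 \<partial>Wd i u)" by (simp add: W.emeasure_space_1)
  also have "\<dots> \<le> (\<integral>\<^sup>+w. ennreal (exp (t * (loss w (fst u) - loss w (snd u))) / 2 + exp (- (t * (loss w (fst u) - loss w (snd u)))) / 2) \<partial>Wd i u)"
    using cosh_ge1 by (intro nn_integral_mono) (simp add: add_divide_distrib[symmetric])
  finally show ?thesis unfolding law_G_nn[OF i u] .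
qed

lemma cgf_eq:
  assumes i: "i < n" and u: "u \<in> space X2"
  shows "cgf (law_G \<xi> MW K n loss i u) t = eln (\<integral>\<^sup>+x. ennreal (exp (t * x)) \<partial>law_G \<xi> MW K n loss i u)"
  unfolding cgf_def Let_def law_G_mean[OF i u] by simp

lemma eln_ge0: "1 \<le> x \<Longrightarrow> 0 \<le> eln x"
  unfolding eln_def by (cases x rule: ennreal_cases) (auto simp: ennreal_1[symmetric] simp del: ennreal_1)

lemma cgf_nonneg:
  assumes i: "i < n" and u: "u \<in> space X2"
  shows "0 \<le> cgf (law_G \<xi> MW K n loss i u) t"
  unfolding cgf_eq[OF i u] by (rule eln_ge0[OF law_G_nn_ge1[OF i u]])

end

context setting begin

lemma kl_nonneg:
  assumes i: "i < n" and u: "u \<in> space X2"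
  shows "0 \<le> cmi_pt \<xi> MW K n i u"
proof -
  have "ereal (integral\<^sup>L (cond_WR \<xi> MW K n i u) (\<lambda>_. 0)) \<le> kl_div (cond_WR \<xi> MW K n i u) (decoupled \<xi> MW K n i u) + ereal (ln 1)"
  proof (rule DV)
    show "prob_space (cond_WR \<xi> MW K n i u)" using P_facts[OF i u] by simp
    show "prob_space (decoupled \<xi> MW K n i u)" using dec_facts[OF i u] by simp
    show "sets (cond_WR \<xi> MW K n i u) = sets (decoupled \<xi> MW K n i u)" using dec_facts[OF i u] P_facts[OF i u] by simp
    show "(\<integral>\<^sup>+ x. ennreal (exp 0) \<partial>decoupled \<xi> MW K n i u) = ennreal 1"
      using prob_space.emeasure_space_1[OF dec_facts(1)[OF i u]] by simp
  qed auto
  then show ?thesis unfolding cmi_pt_eq by (simp add: zero_ereal_def)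
qed

definition B :: "nat \<Rightarrow> 'z \<times> 'z \<Rightarrow> ereal" where
  "B i u = inv_conj (cgf (law_G \<xi> MW K n loss i u)) (cmi_pt \<xi> MW K n i u)"

lemma B_nonneg:
  assumes i: "i < n" and u: "u \<in> space X2"
  shows "0 \<le> B i u"
  unfolding B_def inv_conj_def
  by (intro INF_greatest zero_le_divide_ereal add_nonneg_nonneg kl_nonneg[OF i u] cgf_nonneg[OF i u]) auto

definition H :: "'z \<times> 'z \<Rightarrow> 'w \<times> int \<Rightarrow> real" where
  "H u = (\<lambda>(w, r). loss w (if r = 1 then fst u else snd u) - loss w (if r = 1 then snd u else fst u))"

lemma Hm[measurable]: assumes u: "u \<in> space X2" shows "H u \<in> borel_measurable (MW \<Otimes>\<^sub>M rad)"
proof -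
  have [measurable]: "(\<lambda>x. fst u) \<in> MW \<Otimes>\<^sub>M rad \<rightarrow>\<^sub>M \<xi>" "(\<lambda>x. snd u) \<in> MW \<Otimes>\<^sub>M rad \<rightarrow>\<^sub>M \<xi>"
    using u_space[OF u] by auto
  have p: "Measurable.pred (MW \<Otimes>\<^sub>M rad) (\<lambda>x. snd x = 1)"
  proof -
    have "(\<lambda>r::int. r = 1) \<in> measurable rad (count_space UNIV)"
      by (subst measurable_cong_sets[of rad "count_space UNIV"]) auto
    from measurable_compose[OF measurable_snd this] show ?thesis by (simp add: comp_def)
  qed
  have s1: "(\<lambda>x. if snd x = 1 then fst u else snd u) \<in> MW \<Otimes>\<^sub>M rad \<rightarrow>\<^sub>M \<xi>"
    using p by measurable
  have s2: "(\<lambda>x. if snd x = 1 then snd u else fst u) \<in> MW \<Otimes>\<^sub>M rad \<rightarrow>\<^sub>M \<xi>"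
    using p by measurable
  have "(\<lambda>x. loss (fst x) (if snd x = 1 then fst u else snd u) - loss (fst x) (if snd x = 1 then snd u else fst u)) \<in> borel_measurable (MW \<Otimes>\<^sub>M rad)"
    using loss_meas[OF measurable_fst s1] loss_meas[OF measurable_fst s2] by measurable
  then show ?thesis unfolding H_def by (simp add: case_prod_beta')
qed

lemma B_bound:
  assumes i: "i < n" and u: "u \<in> space X2" and int: "integrable (cond_WR \<xi> MW K n i u) (H u)"
  shows "ereal (integral\<^sup>L (cond_WR \<xi> MW K n i u) (H u)) \<le> B i u"
proof -
  let ?P = "cond_WR \<xi> MW K n i u" and ?Q = "decoupled \<xi> MW K n i u"
  let ?G = "\<lambda>(w, r). real_of_int r * (loss w (fst u) - loss w (snd u))"
  interpret P: prob_space ?P using P_facts[OF i u] by simp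
  have sP: "sets ?P = sets (MW \<Otimes>\<^sub>M rad)" using P_facts[OF i u] by simp
  have GmP[measurable]: "?G \<in> borel_measurable ?P" using Gm[OF u] sP by (simp cong: measurable_cong_sets)
  have HmP[measurable]: "H u \<in> borel_measurable ?P" using Hm[OF u] sP by (simp cong: measurable_cong_sets)
  have sndm: "snd \<in> ?P \<rightarrow>\<^sub>M rad" using sP by (simp cong: measurable_cong_sets)
  have "AE x in distr ?P rad snd. x \<in> {-1, 1}" unfolding P_rad[OF i u] by (rule rad_AE)
  then have ae: "AE x in ?P. snd x \<in> {-1, 1}" using sndm by (subst (asm) AE_distr_iff) auto
  have aeHG: "AE x in ?P. H u x = ?G x"
    using ae by eventually_elim (auto simp: H_def)
  have Gint: "integrable ?P ?G" using int aeHG by (subst integrable_cong_AE[OF GmP HmP]) (auto elim: AE_mp)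
  have HG: "integral\<^sup>L ?P (H u) = integral\<^sup>L ?P ?G" using aeHG by (intro integral_cong_AE) auto
  have "ereal (integral\<^sup>L ?P ?G) \<le> (cmi_pt \<xi> MW K n i u + cgf (law_G \<xi> MW K n loss i u) t) / ereal t" if t: "t > 0" for t
  proof -
    have eta: "0 \<le> cmi_pt \<xi> MW K n i u" by (rule kl_nonneg[OF i u])
    define Z where "Z = (\<integral>\<^sup>+x. ennreal (exp (t * x)) \<partial>law_G \<xi> MW K n loss i u)"
    have Z1: "1 \<le> Z" unfolding Z_def by (rule law_G_nn_ge1[OF i u])
    have cg: "cgf (law_G \<xi> MW K n loss i u) t = eln Z" unfolding Z_def by (rule cgf_eq[OF i u])
    show ?thesis
    proof (cases "Z = \<infinity>")
      case True
      then have "cgf (law_G \<xi> MW K n loss i u) t = \<infinity>" unfolding cg eln_def by simp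
      then show ?thesis using eta t by simp
    next
      case False
      then obtain z where z: "Z = ennreal z" "0 \<le> z" by (cases Z rule: ennreal_cases) auto
      have z1: "1 \<le> z" using Z1 z by (simp add: ennreal_1[symmetric] del: ennreal_1)
      have eln: "eln Z = ereal (ln z)" using z z1 unfolding eln_def by auto
      have Gm': "?G \<in> borel_measurable ?Q" using Gm[OF u] dec_facts(2)[OF i u] by (simp cong: measurable_cong_sets)
      have "ereal (integral\<^sup>L ?P (\<lambda>x. t * ?G x)) \<le> kl_div ?P ?Q + ereal (ln z)"
      proof (rule DV)
        show "prob_space ?P" "prob_space ?Q" using P_facts[OF i u] dec_facts[OF i u] by auto
        show "sets ?P = sets ?Q" using dec_facts[OF i u] sP by simp
        show "(\<lambda>x. t * ?G x) \<in> borel_measurable ?Q" using Gm' by measurable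
        show "integrable ?P (\<lambda>x. t * ?G x)" using Gint by (rule integrable_mult_right)
        show "(\<integral>\<^sup>+x. ennreal (exp (t * ?G x)) \<partial>?Q) = ennreal z"
          using z Gm' unfolding Z_def law_G_def by (subst (asm) nn_integral_distr) auto
        show "z > 0" using z1 by simp
      qed
      then have "ereal t * ereal (integral\<^sup>L ?P ?G) \<le> cmi_pt \<xi> MW K n i u + cgf (law_G \<xi> MW K n loss i u) t"
        unfolding cmi_pt_eq cg eln by simp
      then show ?thesis using t by (subst ereal_le_divide_pos) auto
    qed
  qed
  then have "ereal (integral\<^sup>L ?P ?G) \<le> B i u"
    unfolding B_def inv_conj_def by (intro INF_greatest) auto
  then show ?thesis using HG by simp
qed

end


lemma nn_integral_cmult_lower:
  fixes c :: ennreal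
  shows "c * (\<integral>\<^sup>+x. f x \<partial>M) \<le> (\<integral>\<^sup>+x. c * f x \<partial>M)"
  unfolding nn_integral_def[of M f] SUP_mult_left_ennreal
proof (rule SUP_least, clarify)
  fix s assume s: "simple_function M s" "s \<le> f"
  have cs: "simple_function M (\<lambda>x. c * s x)" using s(1) by auto
  have "c * integral\<^sup>S M s = integral\<^sup>S M (\<lambda>x. c * s x)" using s(1) by simp
  also have "\<dots> = (\<integral>\<^sup>+x. c * s x \<partial>M)" using cs by (simp add: nn_integral_eq_simple_integral)
  also have "\<dots> \<le> (\<integral>\<^sup>+x. c * f x \<partial>M)"
    using s(2) by (intro nn_integral_mono mult_left_mono) (auto simp: le_fun_def)
  finally show "c * integral\<^sup>S M s \<le> (\<integral>\<^sup>+x. c * f x \<partial>M)" .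
qed

lemma eexp_nonneg:
  assumes "\<And>x. x \<in> space M \<Longrightarrow> 0 \<le> f x"
  shows "eexp M f = enn2ereal (\<integral>\<^sup>+x. e2ennreal (f x) \<partial>M)"
proof -
  have "(\<integral>\<^sup>+x. e2ennreal (- f x) \<partial>M) = (\<integral>\<^sup>+x. 0 \<partial>M)"
    using assms by (intro nn_integral_cong e2ennreal_neg) auto
  then show ?thesis unfolding eexp_def by (simp add: zero_ennreal.rep_eq)
qed

context setting begin

lemma Wd_meas: assumes i: "i < n" shows "Wd i \<in> X2 \<rightarrow>\<^sub>M subprob_algebra MW"
  unfolding Wd_def
  by (rule measurable_compose[OF measurable_prob_algebraD[OF cond_WR_meas[OF i]] measurable_distr]) simp

lemma cgf_meas:
  assumes i: "i < n"
  shows "(\<lambda>u. e2ennreal (cgf (law_G \<xi> MW K n loss i u) t)) \<in> borel_measurable X2"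
proof -
  define Y where "Y u = (\<integral>\<^sup>+w. ennreal (exp (t * (loss w (fst u) - loss w (snd u))) / 2 + exp (- (t * (loss w (fst u) - loss w (snd u)))) / 2) \<partial>Wd i u)" for u
  have [measurable]: "(\<lambda>x. loss (snd x) (fst (fst x))) \<in> borel_measurable (X2 \<Otimes>\<^sub>M MW)"
    by (rule loss_meas) auto
  have [measurable]: "(\<lambda>x. loss (snd x) (snd (fst x))) \<in> borel_measurable (X2 \<Otimes>\<^sub>M MW)"
    by (rule loss_meas) auto
  have Ym[measurable]: "Y \<in> borel_measurable X2" unfolding Y_def
    by (rule nn_integral_measurable_subprob_algebra2[OF _ Wd_meas[OF i]]) measurable
  have eq: "e2ennreal (cgf (law_G \<xi> MW K n loss i u) t) = (if Y u = top then top else ennreal (ln (enn2real (Y u))))"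
    if u: "u \<in> space X2" for u
  proof -
    have Y1: "1 \<le> Y u" using law_G_nn_ge1[OF i u, of t] unfolding law_G_nn[OF i u] Y_def .
    have c: "cgf (law_G \<xi> MW K n loss i u) t = eln (Y u)" unfolding cgf_eq[OF i u] law_G_nn[OF i u] Y_def ..
    show ?thesis
    proof (cases "Y u" rule: ennreal_cases)
      case (real r)
      then have "r \<noteq> 0" using Y1 by (auto simp: ennreal_1[symmetric] simp del: ennreal_1)
      then show ?thesis unfolding c eln_def using real by simp
    qed (simp add: c eln_def)
  qed
  have "(\<lambda>u. if Y u = top then top else ennreal (ln (enn2real (Y u)))) \<in> borel_measurable X2"
    by measurable
  then show ?thesis by (rule measurable_cong[THEN iffD1, rotated]) (simp add: eq)
qed

lemma part3:
  assumes i: "i < n"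
  shows "eexp X2 (B i) \<le> inv_conj (\<lambda>t. eexp X2 (\<lambda>u. cgf (law_G \<xi> MW K n loss i u) t)) (cmi \<xi> MW K n i)"
proof -
  have eB: "eexp X2 (B i) = enn2ereal (\<integral>\<^sup>+u. e2ennreal (B i u) \<partial>X2)"
    using B_nonneg[OF i] by (intro eexp_nonneg) auto
  have eI: "cmi \<xi> MW K n i = enn2ereal (\<integral>\<^sup>+u. e2ennreal (cmi_pt \<xi> MW K n i u) \<partial>X2)"
    unfolding cmi_def using kl_nonneg[OF i] by (intro eexp_nonneg) auto
  have eC: "eexp X2 (\<lambda>u. cgf (law_G \<xi> MW K n loss i u) t) = enn2ereal (\<integral>\<^sup>+u. e2ennreal (cgf (law_G \<xi> MW K n loss i u) t) \<partial>X2)" for t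
    using cgf_nonneg[OF i] by (intro eexp_nonneg) auto
  show ?thesis unfolding inv_conj_def eB eI eC
  proof (rule INF_greatest)
    fix t :: real assume "t \<in> {0<..}"
    then have t: "t > 0" by simp
    let ?B = "\<lambda>u. e2ennreal (B i u)" and ?I = "\<lambda>u. e2ennreal (cmi_pt \<xi> MW K n i u)"
      and ?C = "\<lambda>u. e2ennreal (cgf (law_G \<xi> MW K n loss i u) t)"
    have pw: "ennreal t * ?B u \<le> ?I u + ?C u" if u: "u \<in> space X2" for u
    proof -
      have "B i u \<le> (cmi_pt \<xi> MW K n i u + cgf (law_G \<xi> MW K n loss i u) t) / ereal t"
        unfolding B_def inv_conj_def using t by (intro INF_lower) auto
      then have le: "ereal t * B i u \<le> cmi_pt \<xi> MW K n i u + cgf (law_G \<xi> MW K n loss i u) t"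
        using t by (subst (asm) ereal_le_divide_pos) auto
      have b0: "0 \<le> B i u" using B_nonneg[OF i u] .
      have i0: "0 \<le> cmi_pt \<xi> MW K n i u" using kl_nonneg[OF i u] .
      have c0: "0 \<le> cgf (law_G \<xi> MW K n loss i u) t" using cgf_nonneg[OF i u] .
      show ?thesis
        unfolding less_eq_ennreal.rep_eq times_ennreal.rep_eq plus_ennreal.rep_eq
        using le b0 i0 c0 t by (simp add: enn2ereal_e2ennreal)
    qed
    have "ennreal t * (\<integral>\<^sup>+u. ?B u \<partial>X2) \<le> (\<integral>\<^sup>+u. ennreal t * ?B u \<partial>X2)"
      by (rule nn_integral_cmult_lower)
    also have "\<dots> \<le> (\<integral>\<^sup>+u. ?I u + ?C u \<partial>X2)"
      using pw by (intro nn_integral_mono) auto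
    also have "\<dots> \<le> (\<integral>\<^sup>+u. ?I u \<partial>X2) + (\<integral>\<^sup>+u. ?C u \<partial>X2)"
      by (rule nn_integral_subadd_meas[OF cgf_meas[OF i]])
    finally have "ennreal t * (\<integral>\<^sup>+u. ?B u \<partial>X2) \<le> (\<integral>\<^sup>+u. ?I u \<partial>X2) + (\<integral>\<^sup>+u. ?C u \<partial>X2)" .
    then have "ereal t * enn2ereal (\<integral>\<^sup>+u. ?B u \<partial>X2) \<le> enn2ereal (\<integral>\<^sup>+u. ?I u \<partial>X2) + enn2ereal (\<integral>\<^sup>+u. ?C u \<partial>X2)"
      unfolding less_eq_ennreal.rep_eq times_ennreal.rep_eq plus_ennreal.rep_eq using t by simp
    then show "enn2ereal (\<integral>\<^sup>+u. ?B u \<partial>X2) \<le> (enn2ereal (\<integral>\<^sup>+u. ?I u \<partial>X2) + enn2ereal (\<integral>\<^sup>+u. ?C u \<partial>X2)) / ereal t"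
      using t by (subst ereal_le_divide_pos) auto
  qed
qed

end


lemma prod_indicator_eq: "finite J \<Longrightarrow> (\<Prod>j\<in>J. indicator (F j) (x j) :: ennreal) = indicator {x. \<forall>j\<in>J. x j \<in> F j} x"
  by (smt (verit, best) ennreal_prod_eq_0 indicator_simps(1,2) mem_Collect_eq prod.neutral)

context setting begin

definition test :: "nat \<Rightarrow> ('z \<times> 'z) \<times> (nat \<Rightarrow> 'z \<times> 'z) \<times> (nat \<Rightarrow> int) \<Rightarrow> 'z" where
  "test i = (\<lambda>(u, a). if snd a i = 1 then fst u else snd u)"

definition Phi :: "nat \<Rightarrow> ('z \<times> 'z) \<times> (nat \<Rightarrow> 'z \<times> 'z) \<times> (nat \<Rightarrow> int) \<Rightarrow> (nat \<Rightarrow> 'z) \<times> 'z" where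
  "Phi i x = (tr i x, test i x)"

lemma pred_rad: "Measurable.pred rad P"
  by (subst measurable_cong_sets[of rad "count_space UNIV"]) auto

lemma rs_i_pred[measurable]: assumes j: "j < n" and f[measurable]: "f \<in> M \<rightarrow>\<^sub>M AA"
  shows "Measurable.pred M (\<lambda>x. snd (f x) j = 1)"
proof -
  have "(\<lambda>x. snd (f x) j) \<in> M \<rightarrow>\<^sub>M rad"
    using measurable_compose[OF f rs_comp_meas[OF j]] by simp
  from measurable_compose[OF this pred_rad[of "\<lambda>r. r = 1"]] show ?thesis by simp
qed

lemma test_meas[measurable]: assumes i: "i < n" shows "test i \<in> X2 \<Otimes>\<^sub>M AA \<rightarrow>\<^sub>M \<xi>"
proof -
  have "(\<lambda>x. if snd (snd x) i = 1 then fst (fst x) else snd (fst x)) \<in> X2 \<Otimes>\<^sub>M AA \<rightarrow>\<^sub>M \<xi>"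
    using rs_i_pred[OF i measurable_snd] by measurable
  then show ?thesis unfolding test_def by (simp add: case_prod_beta')
qed

lemma Phi_meas[measurable]: assumes i: "i < n" shows "Phi i \<in> X2 \<Otimes>\<^sub>M AA \<rightarrow>\<^sub>M Pn \<Otimes>\<^sub>M \<xi>"
  unfolding Phi_def using tr_meas[OF i] test_meas[OF i] by measurable

end

context setting begin

lemma Phi_ind:
  assumes i: "i < n" and A: "\<And>j. j < n \<Longrightarrow> A j \<in> sets \<xi>" and Bs: "Bs \<in> sets \<xi>"
    and x: "x \<in> space (X2 \<Otimes>\<^sub>M AA)"
  shows "indicator (Phi i -` (Pi\<^sub>E {..<n} A \<times> Bs) \<inter> space (X2 \<Otimes>\<^sub>M AA)) x =
    indicator (if snd (snd x) i = 1 then Bs \<times> A i else A i \<times> Bs) (fst x) *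
    (\<Prod>j\<in>{..<n}-{i}. indicator (if snd (snd x) j = 1 then space \<xi> \<times> A j else A j \<times> space \<xi>) (fst (snd x) j) :: ennreal)"
proof -
  obtain u zs rs where xe: "x = (u, zs, rs)" by (cases x) auto
  have u: "u \<in> space \<xi> \<times> space \<xi>" and zs: "\<And>j. j < n \<Longrightarrow> zs j \<in> space \<xi> \<times> space \<xi>"
    using x unfolding xe by (auto simp: space_pair_measure space_PiM PiE_iff)
  let ?F = "\<lambda>j. if rs j = 1 then space \<xi> \<times> A j else A j \<times> space \<xi>"
  have prodeq: "(\<Prod>j\<in>{..<n}-{i}. indicator (?F j) (zs j) :: ennreal) = indicator {zs. \<forall>j\<in>{..<n}-{i}. zs j \<in> ?F j} zs"
    by (rule prod_indicator_eq) simp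
  have trj: "train n (zs(i := u)) rs j = (if rs j = 1 then snd ((zs(i := u)) j) else fst ((zs(i := u)) j))" if "j < n" for j
    using that by (simp add: train_def)
  have ext: "train n (zs(i := u)) rs \<in> extensional {..<n}" by (simp add: train_def extensional_def)
  have c1: "tr i x \<in> Pi\<^sub>E {..<n} A \<longleftrightarrow> (\<forall>j<n. train n (zs(i := u)) rs j \<in> A j)"
    unfolding tr_def xe using ext by (auto simp: PiE_iff)
  have c2: "(\<forall>j<n. train n (zs(i := u)) rs j \<in> A j) \<longleftrightarrow>
      (if rs i = 1 then snd u else fst u) \<in> A i \<and> (\<forall>j\<in>{..<n}-{i}. zs j \<in> ?F j)"
  proof -
    have "(\<forall>j<n. train n (zs(i := u)) rs j \<in> A j) \<longleftrightarrow>
        train n (zs(i := u)) rs i \<in> A i \<and> (\<forall>j\<in>{..<n}-{i}. train n (zs(i := u)) rs j \<in> A j)"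
      using i by auto
    also have "train n (zs(i := u)) rs i = (if rs i = 1 then snd u else fst u)" using trj[OF i] by simp
    also have "(\<forall>j\<in>{..<n}-{i}. train n (zs(i := u)) rs j \<in> A j) \<longleftrightarrow> (\<forall>j\<in>{..<n}-{i}. zs j \<in> ?F j)"
    proof (intro ball_cong refl)
      fix j assume j: "j \<in> {..<n}-{i}"
      then have "zs j \<in> space \<xi> \<times> space \<xi>" using zs by auto
      then show "train n (zs(i := u)) rs j \<in> A j \<longleftrightarrow> zs j \<in> ?F j"
        using trj[of j] j by (cases "zs j") auto
    qed
    finally show ?thesis .
  qed
  have c3: "test i x = (if rs i = 1 then fst u else snd u)" unfolding test_def xe by simp
  have c4: "((if rs i = 1 then snd u else fst u) \<in> A i \<and> (if rs i = 1 then fst u else snd u) \<in> Bs) \<longleftrightarrow>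
      u \<in> (if rs i = 1 then Bs \<times> A i else A i \<times> Bs)"
    by (cases u) auto
  have inPhi: "Phi i x \<in> Pi\<^sub>E {..<n} A \<times> Bs \<longleftrightarrow>
     u \<in> (if rs i = 1 then Bs \<times> A i else A i \<times> Bs) \<and> (\<forall>j\<in>{..<n}-{i}. zs j \<in> ?F j)"
    unfolding Phi_def mem_Times_iff fst_conv snd_conv c1 c2 c3 using c4 by blast
  let ?S = "if rs i = 1 then Bs \<times> A i else A i \<times> Bs" and ?C = "{zs. \<forall>j\<in>{..<n}-{i}. zs j \<in> ?F j}"
  have l: "x \<in> Phi i -` (Pi\<^sub>E {..<n} A \<times> Bs) \<inter> space (X2 \<Otimes>\<^sub>M AA) \<longleftrightarrow> u \<in> ?S \<and> zs \<in> ?C"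
    using x inPhi by auto
  have "indicator (Phi i -` (Pi\<^sub>E {..<n} A \<times> Bs) \<inter> space (X2 \<Otimes>\<^sub>M AA)) x = (indicator ?S u * indicator ?C zs :: ennreal)"
    by (cases "u \<in> ?S"; cases "zs \<in> ?C") (use l in \<open>simp_all add: indicator_simps\<close>)
  then show ?thesis unfolding prodeq[symmetric] by (simp add: xe)
qed

end

context setting begin

lemma Phi_box:
  assumes i: "i < n" and A: "\<And>j. j < n \<Longrightarrow> A j \<in> sets \<xi>" and Bs: "Bs \<in> sets \<xi>"
  shows "emeasure (X2 \<Otimes>\<^sub>M AA) (Phi i -` (Pi\<^sub>E {..<n} A \<times> Bs) \<inter> space (X2 \<Otimes>\<^sub>M AA)) =
    emeasure \<xi> Bs * (\<Prod>j<n. emeasure \<xi> (A j))"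
proof -
  interpret xi: prob_space \<xi> by (rule xi)
  interpret X2: prob_space X2 by (rule X2_prob)
  interpret AA: prob_space AA by (rule AA_prob)
  interpret Zs: prob_space Zs by (rule Zs_prob)
  interpret Rs: prob_space Rs by (rule Rs_prob)
  interpret XA: pair_sigma_finite X2 AA ..
  interpret ZR: pair_sigma_finite Zs Rs ..
  interpret PZ: product_sigma_finite "\<lambda>_. X2" by unfold_locales
  let ?Om = "X2 \<Otimes>\<^sub>M AA"
  let ?X = "Phi i -` (Pi\<^sub>E {..<n} A \<times> Bs) \<inter> space ?Om"
  let ?F = "\<lambda>(rs::nat \<Rightarrow> int) j. if rs j = 1 then space \<xi> \<times> A j else A j \<times> space \<xi>"
  let ?S = "\<lambda>r::int. if r = 1 then Bs \<times> A i else A i \<times> Bs"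
  define h where "h a = (\<Prod>j\<in>{..<n}-{i}. indicator (?F (snd a) j) (fst a j) :: ennreal)" for a
  define c where "c = (\<Prod>j\<in>{..<n}-{i}. emeasure \<xi> (A j))"
  have Xs: "?X \<in> sets ?Om"
    using A Bs by (intro measurable_sets[OF Phi_meas[OF i]]) (auto intro!: sets_PiM_I_finite)
  have S: "\<And>r. ?S r \<in> sets X2" using A[OF i] Bs by auto
  have Sm: "\<And>r. emeasure X2 (?S r) = emeasure \<xi> (A i) * emeasure \<xi> Bs"
    using A[OF i] Bs by (auto simp: xi.emeasure_pair_measure_Times mult.commute)
  have Fm: "\<And>rs j. j < n \<Longrightarrow> ?F rs j \<in> sets X2" using A by auto
  have Fe: "\<And>rs j. j < n \<Longrightarrow> emeasure X2 (?F rs j) = emeasure \<xi> (A j)"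
    using A by (auto simp: xi.emeasure_pair_measure_Times xi.emeasure_space_1)
  have hm[measurable]: "h \<in> borel_measurable AA"
  proof -
    have "(\<lambda>a. indicator (?F (snd a) j) (fst a j) :: ennreal) \<in> borel_measurable AA" if j: "j \<in> {..<n}-{i}" for j
    proof -
      have jn: "j < n" using j by simp
      have [measurable]: "(\<lambda>a. fst a j) \<in> AA \<rightarrow>\<^sub>M X2"
        using measurable_compose[OF measurable_fst measurable_component_singleton[of j "{..<n}" "\<lambda>_. X2"]] jn by simp
      have [measurable]: "Measurable.pred AA (\<lambda>a. snd a j = 1)" using rs_i_pred[OF jn measurable_ident] by simp
      have [measurable]: "space \<xi> \<times> A j \<in> sets X2" "A j \<times> space \<xi> \<in> sets X2" using A[OF jn] by auto
      have "(\<lambda>a. if snd a j = 1 then indicator (space \<xi> \<times> A j) (fst a j) else indicator (A j \<times> space \<xi>) (fst a j) :: ennreal) \<in> borel_measurable AA"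
        by measurable
      then show ?thesis by (rule measurable_cong[THEN iffD1, rotated]) auto
    qed
    then show ?thesis unfolding h_def by (intro borel_measurable_prod_ennreal) auto
  qed
  have "emeasure ?Om ?X = (\<integral>\<^sup>+x. indicator ?X x \<partial>?Om)" using Xs by simp
  also have "\<dots> = (\<integral>\<^sup>+a. \<integral>\<^sup>+u. indicator ?X (u, a) \<partial>X2 \<partial>AA)"
    using Xs by (intro XA.nn_integral_snd[symmetric]) auto
  also have "\<dots> = (\<integral>\<^sup>+a. h a * (emeasure \<xi> (A i) * emeasure \<xi> Bs) \<partial>AA)"
  proof (intro nn_integral_cong)
    fix a assume a: "a \<in> space AA"
    have "(\<integral>\<^sup>+u. indicator ?X (u, a) \<partial>X2) = (\<integral>\<^sup>+u. indicator (?S (snd a i)) u * h a \<partial>X2)"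
    proof (intro nn_integral_cong)
      fix u assume u: "u \<in> space X2"
      have "(u, a) \<in> space ?Om" using u a by (simp add: space_pair_measure)
      from Phi_ind[OF i A Bs this] show "indicator ?X (u, a) = indicator (?S (snd a i)) u * h a"
        by (simp add: h_def)
    qed
    also have "\<dots> = emeasure X2 (?S (snd a i)) * h a"
      using S by (subst nn_integral_multc) auto
    finally show "(\<integral>\<^sup>+u. indicator ?X (u, a) \<partial>X2) = h a * (emeasure \<xi> (A i) * emeasure \<xi> Bs)"
      by (simp add: Sm mult.commute)
  qed
  also have "\<dots> = (\<integral>\<^sup>+a. h a \<partial>AA) * (emeasure \<xi> (A i) * emeasure \<xi> Bs)"
    by (rule nn_integral_multc) simp
  also have "(\<integral>\<^sup>+a. h a \<partial>AA) = (\<integral>\<^sup>+rs. \<integral>\<^sup>+zs. h (zs, rs) \<partial>Zs \<partial>Rs)"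
    by (rule ZR.nn_integral_snd[symmetric]) simp
  also have "\<dots> = (\<integral>\<^sup>+rs. c \<partial>Rs)"
  proof (intro nn_integral_cong)
    fix rs assume rs: "rs \<in> space Rs"
    let ?f = "\<lambda>j z. if j = i then 1 else indicator (?F rs j) z :: ennreal"
    have "(\<integral>\<^sup>+zs. h (zs, rs) \<partial>Zs) = (\<integral>\<^sup>+zs. (\<Prod>j\<in>{..<n}. ?f j (zs j)) \<partial>Zs)"
    proof (intro nn_integral_cong)
      fix zs assume "zs \<in> space Zs"
      have "(\<Prod>j\<in>{..<n}. ?f j (zs j)) = ?f i (zs i) * (\<Prod>j\<in>{..<n}-{i}. ?f j (zs j))"
        using i by (subst prod.remove[of _ i]) auto
      also have "\<dots> = h (zs, rs)" unfolding h_def by (auto intro!: prod.cong)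
      finally show "h (zs, rs) = (\<Prod>j\<in>{..<n}. ?f j (zs j))" ..
    qed
    also have "\<dots> = (\<Prod>j\<in>{..<n}. integral\<^sup>N X2 (?f j))"
      using Fm by (intro PZ.product_nn_integral_prod) auto
    also have "\<dots> = (\<Prod>j\<in>{..<n}. if j = i then 1 else emeasure \<xi> (A j))"
      using Fm Fe X2.emeasure_space_1 by (intro prod.cong) auto
    also have "\<dots> = c" unfolding c_def using i
      by (subst prod.remove[of _ i]) (auto intro!: prod.cong)
    finally show "(\<integral>\<^sup>+zs. h (zs, rs) \<partial>Zs) = c" .
  qed
  also have "\<dots> = c" using Rs.emeasure_space_1 by simp
  finally show ?thesis unfolding c_def using i
    by (subst prod.remove[of _ i]) (auto simp: mult_ac)
qed

end

context setting begin

lemma Phi_distr: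
  assumes i: "i < n"
  shows "distr (X2 \<Otimes>\<^sub>M AA) (Pn \<Otimes>\<^sub>M \<xi>) (Phi i) = Pn \<Otimes>\<^sub>M \<xi>"
proof -
  interpret xi: prob_space \<xi> by (rule xi)
  interpret Pn: prob_space Pn by (rule Pn_prob)
  interpret PX: product_sigma_finite "\<lambda>_. \<xi>" by unfold_locales
  let ?Om = "X2 \<Otimes>\<^sub>M AA"
  let ?D = "distr ?Om (Pn \<Otimes>\<^sub>M \<xi>) (Phi i)"
  have Dprob: "prob_space ?D"
  proof (rule prob_space.prob_space_distr[OF _ Phi_meas[OF i]])
    show "prob_space ?Om" using X2_prob AA_prob by (rule prob_space_pair)
  qed
  interpret D: prob_space ?D by (rule Dprob)
  have sD: "sets ?D = sets (Pn \<Otimes>\<^sub>M \<xi>)" by simp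
  have spD: "space ?D = space Pn \<times> space \<xi>" by (simp add: space_pair_measure)
  have box: "emeasure ?D (Pi\<^sub>E {..<n} A \<times> Bs) = emeasure \<xi> Bs * (\<Prod>j<n. emeasure \<xi> (A j))"
    if A: "\<And>j. j < n \<Longrightarrow> A j \<in> sets \<xi>" and Bs: "Bs \<in> sets \<xi>" for A Bs
  proof -
    have "Pi\<^sub>E {..<n} A \<times> Bs \<in> sets (Pn \<Otimes>\<^sub>M \<xi>)" using A Bs by (auto intro!: sets_PiM_I_finite)
    then show ?thesis using Phi_box[OF i A Bs] by (simp add: emeasure_distr[OF Phi_meas[OF i]])
  qed
  have main: "emeasure Pn E * emeasure \<xi> Bs = emeasure ?D (E \<times> Bs)" if E: "E \<in> sets Pn" and Bs: "Bs \<in> sets \<xi>" for E Bs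
  proof -
    let ?MB = "distr (density ?D (indicator (space Pn \<times> Bs))) Pn fst"
    let ?NB = "density Pn (\<lambda>_. emeasure \<xi> Bs)"
    have SB: "space Pn \<times> Bs \<in> sets (Pn \<Otimes>\<^sub>M \<xi>)" using Bs by auto
    have MBe: "emeasure ?MB E' = emeasure ?D (E' \<times> Bs)" if E': "E' \<in> sets Pn" for E'
    proof -
      have fs: "fst -` E' \<inter> space ?D \<in> sets ?D" using E' by (auto intro!: measurable_sets)
      have "emeasure ?MB E' = emeasure (density ?D (indicator (space Pn \<times> Bs))) (fst -` E' \<inter> space ?D)"
        using E' by (subst emeasure_distr) auto
      also have "\<dots> = (\<integral>\<^sup>+x. indicator (space Pn \<times> Bs) x * indicator (fst -` E' \<inter> space ?D) x \<partial>?D)"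
        using fs SB by (subst emeasure_density) auto
      also have "\<dots> = (\<integral>\<^sup>+x. indicator (E' \<times> Bs) x \<partial>?D)"
        using sets.sets_into_space[OF E'] by (intro nn_integral_cong) (auto simp: spD indicator_def)
      also have "\<dots> = emeasure ?D (E' \<times> Bs)" using E' Bs by (subst nn_integral_indicator) auto
      finally show ?thesis .
    qed
    have "?MB = ?NB"
    proof (rule measure_eqI_PiM_finite[where I="{..<n}" and M="\<lambda>_. \<xi>"])
      show "finite {..<n}" by simp
      show "sets ?MB = sets Pn" by simp
      show "sets ?NB = sets Pn" by simp
      fix A assume A: "\<And>j. j \<in> {..<n} \<Longrightarrow> A j \<in> sets \<xi>"
      have PA: "Pi\<^sub>E {..<n} A \<in> sets Pn" using A by (auto intro!: sets_PiM_I_finite)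
      have "emeasure ?MB (Pi\<^sub>E {..<n} A) = emeasure \<xi> Bs * (\<Prod>j<n. emeasure \<xi> (A j))"
        using MBe[OF PA] box[of A Bs] A Bs by simp
      also have "\<dots> = emeasure ?NB (Pi\<^sub>E {..<n} A)"
      proof -
        have "emeasure Pn (Pi\<^sub>E {..<n} A) = (\<Prod>j<n. emeasure \<xi> (A j))"
          using A by (subst PX.emeasure_PiM) auto
        then show ?thesis using PA by (simp add: emeasure_density_const)
      qed
      finally show "emeasure ?MB (Pi\<^sub>E {..<n} A) = emeasure ?NB (Pi\<^sub>E {..<n} A)" .
    next
      show "range (\<lambda>_. space Pn) \<subseteq> prod_algebra {..<n} (\<lambda>_. \<xi>)"
        by (auto simp: space_PiM intro!: prod_algebraI_finite)
      show "(\<Union>k::nat. space Pn) = space Pn" by simp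
      fix k :: nat
      have "emeasure ?MB (space Pn) = emeasure ?D (space Pn \<times> Bs)" using MBe[of "space Pn"] by simp
      also have "\<dots> \<noteq> \<infinity>" by simp
      finally show "emeasure ?MB (space Pn) \<noteq> \<infinity>" .
    qed
    then have "emeasure ?MB E = emeasure ?NB E" by simp
    then show ?thesis using MBe[OF E] E by (simp add: emeasure_density_const mult.commute)
  qed
  have "Pn \<Otimes>\<^sub>M \<xi> = ?D"
    using main by (intro pair_measure_eqI) (auto intro: prob_space_imp_sigma_finite xi Pn_prob)
  then show ?thesis ..
qed

end

context setting begin

abbreviation "NN \<equiv> (Pn \<Otimes>\<^sub>M MW) \<Otimes>\<^sub>M \<xi>"
abbreviation "JJ \<equiv> joint_ZW \<xi> MW K n"

definition LL :: "(nat \<Rightarrow> 'z) \<times> 'z \<Rightarrow> (((nat \<Rightarrow> 'z) \<times> 'w) \<times> 'z) measure" where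
  "LL = (\<lambda>(zs, z). distr (K zs) NN (\<lambda>w. ((zs, w), z)))"

lemma K_meas_sub[measurable]: "K \<in> Pn \<rightarrow>\<^sub>M subprob_algebra MW"
  using Km by (rule measurable_prob_algebraD)

lemma LL_meas[measurable]: "LL \<in> Pn \<Otimes>\<^sub>M \<xi> \<rightarrow>\<^sub>M prob_algebra NN"
proof -
  have "(\<lambda>x. distr (K (fst x)) NN (\<lambda>w. ((fst x, w), snd x))) \<in> Pn \<Otimes>\<^sub>M \<xi> \<rightarrow>\<^sub>M prob_algebra NN"
  proof (rule measurable_distr_prob_space2)
    show "(\<lambda>x. K (fst x)) \<in> Pn \<Otimes>\<^sub>M \<xi> \<rightarrow>\<^sub>M prob_algebra MW" by measurable
    show "(\<lambda>(x, y). ((fst x, y), snd x)) \<in> (Pn \<Otimes>\<^sub>M \<xi>) \<Otimes>\<^sub>M MW \<rightarrow>\<^sub>M NN" by measurable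
  qed
  then show ?thesis unfolding LL_def by (simp add: case_prod_beta')
qed

lemma JJ_eq: "JJ = Pn \<bind> (\<lambda>zs. distr (K zs) (Pn \<Otimes>\<^sub>M MW) (\<lambda>w. (zs, w)))"
  unfolding joint_ZW_def
proof (rule bind_cong[OF refl])
  fix zs assume zs: "zs \<in> space Pn"
  have "space (K zs) \<noteq> {}" using K_prob[OF zs] prob_space.not_empty by blast
  moreover have "(\<lambda>w. (zs, w)) \<in> K zs \<rightarrow>\<^sub>M Pn \<Otimes>\<^sub>M MW" using K_prob(2)[OF zs] zs by (simp cong: measurable_cong_sets)
  ultimately show "K zs \<bind> (\<lambda>w. return (Pn \<Otimes>\<^sub>M MW) (zs, w)) = distr (K zs) (Pn \<Otimes>\<^sub>M MW) (\<lambda>w. (zs, w))"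
    by (rule bind_return_distr')
qed

lemma JJ_kern[measurable]: "(\<lambda>zs. distr (K zs) (Pn \<Otimes>\<^sub>M MW) (\<lambda>w. (zs, w))) \<in> Pn \<rightarrow>\<^sub>M prob_algebra (Pn \<Otimes>\<^sub>M MW)"
  by (rule measurable_distr_prob_space2[OF Km]) measurable

lemma JJ_prob: "prob_space JJ" "sets JJ = sets (Pn \<Otimes>\<^sub>M MW)"
proof -
  have "Pn \<in> space (prob_algebra Pn)" using Pn_prob by (simp add: space_prob_algebra)
  then show "prob_space JJ" "sets JJ = sets (Pn \<Otimes>\<^sub>M MW)"
    unfolding JJ_eq using prob_space_bind'[OF _ JJ_kern] sets_bind'[OF _ JJ_kern] by auto
qed

end

context setting begin

lemma step1: "JJ \<Otimes>\<^sub>M \<xi> = (Pn \<Otimes>\<^sub>M \<xi>) \<bind> LL"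
proof -
  interpret J: prob_space JJ using JJ_prob by simp
  interpret xi: prob_space \<xi> by (rule xi)
  interpret Pn: prob_space Pn by (rule Pn_prob)
  interpret JX: pair_prob_space JJ \<xi> ..
  interpret PX: pair_prob_space Pn \<xi> ..
  have sJX: "sets (JJ \<Otimes>\<^sub>M \<xi>) = sets NN" using JJ_prob(2) by (intro sets_pair_measure_cong) auto
  have retJ: "return (JJ \<Otimes>\<^sub>M \<xi>) = return NN" using sJX by (rule return_sets_cong)
  note [measurable] = JJ_kern
  have g_meas[measurable]: "(\<lambda>p. \<xi> \<bind> (\<lambda>z. return NN (p, z))) \<in> Pn \<Otimes>\<^sub>M MW \<rightarrow>\<^sub>M subprob_algebra NN"
    by (rule measurable_bind[where N=\<xi>]) (auto intro!: measurable_const xi.M_in_subprob simp: return_measurable)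
  have "JJ \<Otimes>\<^sub>M \<xi> = JJ \<bind> (\<lambda>p. \<xi> \<bind> (\<lambda>z. return NN (p, z)))"
    using JX.pair_measure_eq_bind unfolding retJ .
  also have "\<dots> = Pn \<bind> (\<lambda>zs. distr (K zs) (Pn \<Otimes>\<^sub>M MW) (\<lambda>w. (zs, w)) \<bind> (\<lambda>p. \<xi> \<bind> (\<lambda>z. return NN (p, z))))"
    unfolding JJ_eq by (rule bind_assoc[OF measurable_prob_algebraD[OF JJ_kern] g_meas])
  also have "\<dots> = Pn \<bind> (\<lambda>zs. \<xi> \<bind> (\<lambda>z. LL (zs, z)))"
  proof (rule bind_cong[OF refl])
    fix zs assume zs: "zs \<in> space Pn"
    interpret Kz: prob_space "K zs" using K_prob[OF zs] by simp
    interpret KX: pair_prob_space "K zs" \<xi> ..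
    have sK: "sets (K zs) = sets MW" using K_prob[OF zs] by simp
    have m1: "(\<lambda>w. (zs, w)) \<in> K zs \<rightarrow>\<^sub>M Pn \<Otimes>\<^sub>M MW" using sK zs by (simp cong: measurable_cong_sets)
    have "distr (K zs) (Pn \<Otimes>\<^sub>M MW) (\<lambda>w. (zs, w)) \<bind> (\<lambda>p. \<xi> \<bind> (\<lambda>z. return NN (p, z)))
        = K zs \<bind> (\<lambda>w. \<xi> \<bind> (\<lambda>z. return NN ((zs, w), z)))"
      by (subst bind_distr[OF m1 g_meas]) (auto simp: Kz.not_empty)
    also have "\<dots> = \<xi> \<bind> (\<lambda>z. K zs \<bind> (\<lambda>w. return NN ((zs, w), z)))"
    proof (rule KX.bind_rotate)
      show "(\<lambda>(x, y). return NN ((zs, x), y)) \<in> K zs \<Otimes>\<^sub>M \<xi> \<rightarrow>\<^sub>M subprob_algebra NN"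
        using zs sK by (simp cong: measurable_cong_sets add: return_measurable[THEN measurable_compose[rotated]])
    qed
    also have "\<dots> = \<xi> \<bind> (\<lambda>z. LL (zs, z))"
    proof (rule bind_cong[OF refl])
      fix z assume z: "z \<in> space \<xi>"
      have "(\<lambda>w. ((zs, w), z)) \<in> K zs \<rightarrow>\<^sub>M NN" using sK zs z by (simp cong: measurable_cong_sets)
      then show "K zs \<bind> (\<lambda>w. return NN ((zs, w), z)) = LL (zs, z)"
        unfolding LL_def by (simp add: bind_return_distr'[OF Kz.not_empty])
    qed
    finally show "distr (K zs) (Pn \<Otimes>\<^sub>M MW) (\<lambda>w. (zs, w)) \<bind> (\<lambda>p. \<xi> \<bind> (\<lambda>z. return NN (p, z))) = \<xi> \<bind> (\<lambda>z. LL (zs, z))" .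
  qed
  also have "\<dots> = (Pn \<bind> (\<lambda>zs. \<xi> \<bind> (\<lambda>z. return (Pn \<Otimes>\<^sub>M \<xi>) (zs, z)))) \<bind> LL"
  proof -
    have k1: "(\<lambda>zs. \<xi> \<bind> (\<lambda>z. return (Pn \<Otimes>\<^sub>M \<xi>) (zs, z))) \<in> Pn \<rightarrow>\<^sub>M subprob_algebra (Pn \<Otimes>\<^sub>M \<xi>)"
      by (rule measurable_bind[where N=\<xi>]) (auto intro!: measurable_const xi.M_in_subprob simp: return_measurable)
    have "(Pn \<bind> (\<lambda>zs. \<xi> \<bind> (\<lambda>z. return (Pn \<Otimes>\<^sub>M \<xi>) (zs, z)))) \<bind> LL
       = Pn \<bind> (\<lambda>zs. (\<xi> \<bind> (\<lambda>z. return (Pn \<Otimes>\<^sub>M \<xi>) (zs, z))) \<bind> LL)"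
      by (rule bind_assoc[OF k1 measurable_prob_algebraD[OF LL_meas]])
    also have "\<dots> = Pn \<bind> (\<lambda>zs. \<xi> \<bind> (\<lambda>z. LL (zs, z)))"
    proof (rule bind_cong[OF refl])
      fix zs assume zs: "zs \<in> space Pn"
      have "(\<xi> \<bind> (\<lambda>z. return (Pn \<Otimes>\<^sub>M \<xi>) (zs, z))) \<bind> LL = \<xi> \<bind> (\<lambda>z. return (Pn \<Otimes>\<^sub>M \<xi>) (zs, z) \<bind> LL)"
        by (rule bind_assoc[OF _ measurable_prob_algebraD[OF LL_meas]]) (use zs in \<open>auto simp: return_measurable\<close>)
      also have "\<dots> = \<xi> \<bind> (\<lambda>z. LL (zs, z))"
        by (rule bind_cong[OF refl]) (use zs in \<open>auto intro!: bind_return[OF measurable_prob_algebraD[OF LL_meas]] simp: space_pair_measure\<close>)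
      finally show "(\<xi> \<bind> (\<lambda>z. return (Pn \<Otimes>\<^sub>M \<xi>) (zs, z))) \<bind> LL = \<xi> \<bind> (\<lambda>z. LL (zs, z))" .
    qed
    finally show ?thesis ..
  qed
  also have "Pn \<bind> (\<lambda>zs. \<xi> \<bind> (\<lambda>z. return (Pn \<Otimes>\<^sub>M \<xi>) (zs, z))) = Pn \<Otimes>\<^sub>M \<xi>"
    by (rule PX.pair_measure_eq_bind[symmetric])
  finally show ?thesis .
qed

end

context setting begin

abbreviation "Om \<equiv> X2 \<Otimes>\<^sub>M AA"
abbreviation "Om2 \<equiv> Om \<Otimes>\<^sub>M MW"

definition Su :: "nat \<Rightarrow> 'z \<times> 'z \<Rightarrow> (((nat \<Rightarrow> 'z \<times> 'z) \<times> (nat \<Rightarrow> int)) \<times> 'w) measure" where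
  "Su i u = AA \<bind> (\<lambda>a. distr (K (tr i (u, a))) (AA \<Otimes>\<^sub>M MW) (\<lambda>w. (a, w)))"

definition SS :: "nat \<Rightarrow> ((('z \<times> 'z) \<times> (nat \<Rightarrow> 'z \<times> 'z) \<times> (nat \<Rightarrow> int)) \<times> 'w) measure" where
  "SS i = X2 \<bind> (\<lambda>u. distr (Su i u) Om2 (\<lambda>(a, w). ((u, a), w)))"

definition Psi :: "nat \<Rightarrow> (('z \<times> 'z) \<times> (nat \<Rightarrow> 'z \<times> 'z) \<times> (nat \<Rightarrow> int)) \<times> 'w \<Rightarrow> ((nat \<Rightarrow> 'z) \<times> 'w) \<times> 'z" where
  "Psi i = (\<lambda>(x, w). ((tr i x, w), test i x))"

lemma Psi_meas[measurable]: "i < n \<Longrightarrow> Psi i \<in> Om2 \<rightarrow>\<^sub>M NN"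
  unfolding Psi_def by measurable

lemma Su_kern[measurable]: assumes i: "i < n"
  shows "(\<lambda>(u, a). distr (K (tr i (u, a))) (AA \<Otimes>\<^sub>M MW) (\<lambda>w. (a, w))) \<in> X2 \<Otimes>\<^sub>M AA \<rightarrow>\<^sub>M prob_algebra (AA \<Otimes>\<^sub>M MW)"
proof -
  have "(\<lambda>x. distr (K (tr i x)) (AA \<Otimes>\<^sub>M MW) (\<lambda>w. (snd x, w))) \<in> X2 \<Otimes>\<^sub>M AA \<rightarrow>\<^sub>M prob_algebra (AA \<Otimes>\<^sub>M MW)"
    by (rule measurable_distr_prob_space2[OF kap_meas[OF i]]) measurable
  then show ?thesis by (simp add: case_prod_beta')
qed

lemma AA_in: "AA \<in> space (prob_algebra AA)" using AA_prob by (simp add: space_prob_algebra)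
lemma X2_in: "X2 \<in> space (prob_algebra X2)" using X2_prob by (simp add: space_prob_algebra)

lemma Su_meas[measurable]: assumes i: "i < n" shows "Su i \<in> X2 \<rightarrow>\<^sub>M prob_algebra (AA \<Otimes>\<^sub>M MW)"
  unfolding Su_def
  by (rule measurable_bind_prob_space2[OF measurable_const[OF AA_in] Su_kern[OF i]])

lemma SS_kern[measurable]: assumes i: "i < n"
  shows "(\<lambda>u. distr (Su i u) Om2 (\<lambda>(a, w). ((u, a), w))) \<in> X2 \<rightarrow>\<^sub>M prob_algebra Om2"
  by (rule measurable_distr_prob_space2[OF Su_meas[OF i]]) measurable

lemma SS_prob: assumes i: "i < n" shows "prob_space (SS i)" "sets (SS i) = sets Om2"
  unfolding SS_def using prob_space_bind'[OF X2_in SS_kern[OF i]] sets_bind'[OF X2_in SS_kern[OF i]] by auto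

lemma step2: assumes i: "i < n"
  shows "distr (SS i) NN (Psi i) = Om \<bind> (\<lambda>x. LL (Phi i x))"
proof -
  interpret X2: prob_space X2 by (rule X2_prob)
  interpret AA: prob_space AA by (rule AA_prob)
  interpret XA: pair_prob_space X2 AA ..
  have "distr (SS i) NN (Psi i) = X2 \<bind> (\<lambda>u. distr (distr (Su i u) Om2 (\<lambda>(a, w). ((u, a), w))) NN (Psi i))"
    unfolding SS_def by (rule distr_bind[OF measurable_prob_algebraD[OF SS_kern[OF i]] X2.not_empty Psi_meas[OF i]])
  also have "\<dots> = X2 \<bind> (\<lambda>u. AA \<bind> (\<lambda>a. LL (Phi i (u, a))))"
  proof (rule bind_cong[OF refl])
    fix u assume u: "u \<in> space X2"
    have k: "(\<lambda>a. distr (K (tr i (u, a))) (AA \<Otimes>\<^sub>M MW) (\<lambda>w. (a, w))) \<in> AA \<rightarrow>\<^sub>M subprob_algebra (AA \<Otimes>\<^sub>M MW)"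
      using measurable_Pair2[OF Su_kern[OF i] u] by (auto intro: measurable_prob_algebraD)
    have m: "(\<lambda>(a, w). ((u, a), w)) \<in> AA \<Otimes>\<^sub>M MW \<rightarrow>\<^sub>M Om2" using u by measurable
    have mP: "(\<lambda>(a, w). Psi i ((u, a), w)) \<in> AA \<Otimes>\<^sub>M MW \<rightarrow>\<^sub>M NN"
    proof -
      have "(\<lambda>x. Psi i ((\<lambda>(a, w). ((u, a), w)) x)) \<in> AA \<Otimes>\<^sub>M MW \<rightarrow>\<^sub>M NN"
        by (rule measurable_compose[OF m Psi_meas[OF i]])
      then show ?thesis by (simp add: case_prod_beta')
    qed
    have sSu: "sets (Su i u) = sets (AA \<Otimes>\<^sub>M MW)"
      using measurable_space[OF Su_meas[OF i] u] by (simp add: space_prob_algebra)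
    have m': "(\<lambda>(a, w). ((u, a), w)) \<in> Su i u \<rightarrow>\<^sub>M Om2"
      using m measurable_cong_sets[OF sSu refl] by blast
    have "distr (distr (Su i u) Om2 (\<lambda>(a, w). ((u, a), w))) NN (Psi i) = distr (Su i u) NN (Psi i \<circ> (\<lambda>(a, w). ((u, a), w)))"
      by (rule distr_distr[OF Psi_meas[OF i] m'])
    also have "Psi i \<circ> (\<lambda>(a, w). ((u, a), w)) = (\<lambda>(a, w). Psi i ((u, a), w))" by (auto simp: fun_eq_iff)
    finally have "distr (distr (Su i u) Om2 (\<lambda>(a, w). ((u, a), w))) NN (Psi i) = distr (Su i u) NN (\<lambda>(a, w). Psi i ((u, a), w))" .
    also have "\<dots> = AA \<bind> (\<lambda>a. distr (distr (K (tr i (u, a))) (AA \<Otimes>\<^sub>M MW) (\<lambda>w. (a, w))) NN (\<lambda>(a, w). Psi i ((u, a), w)))"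
      unfolding Su_def by (rule distr_bind[OF k AA.not_empty mP])
    also have "\<dots> = AA \<bind> (\<lambda>a. LL (Phi i (u, a)))"
    proof (rule bind_cong[OF refl])
      fix a assume a: "a \<in> space AA"
      have sp: "tr i (u, a) \<in> space Pn" using tr_space[OF i] u a by (simp add: space_pair_measure)
      have sK: "sets (K (tr i (u, a))) = sets MW" using K_prob[OF sp] by simp
      have "distr (distr (K (tr i (u, a))) (AA \<Otimes>\<^sub>M MW) (\<lambda>w. (a, w))) NN (\<lambda>(a, w). Psi i ((u, a), w))
          = distr (K (tr i (u, a))) NN (\<lambda>w. Psi i ((u, a), w))"
      proof -
        have "(\<lambda>w. (a, w)) \<in> MW \<rightarrow>\<^sub>M AA \<Otimes>\<^sub>M MW" using a by simp
        then have f: "(\<lambda>w. (a, w)) \<in> K (tr i (u, a)) \<rightarrow>\<^sub>M AA \<Otimes>\<^sub>M MW"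
          using measurable_cong_sets[OF sK refl] by blast
        show ?thesis by (subst distr_distr[OF mP f]) (simp add: comp_def)
      qed
      also have "\<dots> = LL (Phi i (u, a))" unfolding LL_def Psi_def Phi_def by simp
      finally show "distr (distr (K (tr i (u, a))) (AA \<Otimes>\<^sub>M MW) (\<lambda>w. (a, w))) NN (\<lambda>(a, w). Psi i ((u, a), w)) = LL (Phi i (u, a))" .
    qed
    finally show "distr (distr (Su i u) Om2 (\<lambda>(a, w). ((u, a), w))) NN (Psi i) = AA \<bind> (\<lambda>a. LL (Phi i (u, a)))" .
  qed
  also have "\<dots> = Om \<bind> (\<lambda>x. LL (Phi i x))"
  proof -
    have LP: "(\<lambda>x. LL (Phi i x)) \<in> Om \<rightarrow>\<^sub>M subprob_algebra NN"
      using measurable_compose[OF Phi_meas[OF i] LL_meas] by (auto intro: measurable_prob_algebraD)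
    have k1: "(\<lambda>u. AA \<bind> (\<lambda>a. return Om (u, a))) \<in> X2 \<rightarrow>\<^sub>M subprob_algebra Om"
      by (rule measurable_bind[where N=AA]) (auto intro!: measurable_const AA.M_in_subprob simp: return_measurable)
    have "Om \<bind> (\<lambda>x. LL (Phi i x)) = (X2 \<bind> (\<lambda>u. AA \<bind> (\<lambda>a. return Om (u, a)))) \<bind> (\<lambda>x. LL (Phi i x))"
      using XA.pair_measure_eq_bind by simp
    also have "\<dots> = X2 \<bind> (\<lambda>u. (AA \<bind> (\<lambda>a. return Om (u, a))) \<bind> (\<lambda>x. LL (Phi i x)))"
      by (rule bind_assoc[OF k1 LP])
    also have "\<dots> = X2 \<bind> (\<lambda>u. AA \<bind> (\<lambda>a. LL (Phi i (u, a))))"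
    proof (rule bind_cong[OF refl])
      fix u assume u: "u \<in> space X2"
      have "(AA \<bind> (\<lambda>a. return Om (u, a))) \<bind> (\<lambda>x. LL (Phi i x)) = AA \<bind> (\<lambda>a. return Om (u, a) \<bind> (\<lambda>x. LL (Phi i x)))"
        by (rule bind_assoc[OF _ LP]) (use u in \<open>auto simp: return_measurable\<close>)
      also have "\<dots> = AA \<bind> (\<lambda>a. LL (Phi i (u, a)))"
        by (rule bind_cong[OF refl]) (use u in \<open>auto intro!: bind_return[OF LP] simp: space_pair_measure\<close>)
      finally show "(AA \<bind> (\<lambda>a. return Om (u, a))) \<bind> (\<lambda>x. LL (Phi i x)) = AA \<bind> (\<lambda>a. LL (Phi i (u, a)))" .
    qed
    finally show ?thesis ..
  qed
  finally show ?thesis .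
qed

lemma claimM: assumes i: "i < n" shows "distr (SS i) NN (Psi i) = JJ \<Otimes>\<^sub>M \<xi>"
proof -
  interpret X2: prob_space X2 by (rule X2_prob)
  interpret AA: prob_space AA by (rule AA_prob)
  interpret XA: pair_prob_space X2 AA ..
  have "distr (SS i) NN (Psi i) = Om \<bind> (\<lambda>x. LL (Phi i x))" by (rule step2[OF i])
  also have "\<dots> = distr Om (Pn \<Otimes>\<^sub>M \<xi>) (Phi i) \<bind> LL"
    by (rule bind_distr[symmetric, OF Phi_meas[OF i] measurable_prob_algebraD[OF LL_meas]]) (simp add: XA.P.not_empty)
  also have "\<dots> = (Pn \<Otimes>\<^sub>M \<xi>) \<bind> LL" unfolding Phi_distr[OF i] ..
  also have "\<dots> = JJ \<Otimes>\<^sub>M \<xi>" by (rule step1[symmetric])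
  finally show ?thesis .
qed

end

context setting begin

lemma CW_Su: assumes i: "i < n" and u: "u \<in> space X2"
  shows "distr (Su i u) (MW \<Otimes>\<^sub>M rad) (\<lambda>(a, w). (w, snd a i)) = cond_WR \<xi> MW K n i u"
proof -
  interpret AA: prob_space AA by (rule AA_prob)
  have k: "(\<lambda>a. distr (K (tr i (u, a))) (AA \<Otimes>\<^sub>M MW) (\<lambda>w. (a, w))) \<in> AA \<rightarrow>\<^sub>M subprob_algebra (AA \<Otimes>\<^sub>M MW)"
    using measurable_Pair2[OF Su_kern[OF i] u] by (auto intro: measurable_prob_algebraD)
  have pm: "(\<lambda>(a, w). (w, snd a i)) \<in> AA \<Otimes>\<^sub>M MW \<rightarrow>\<^sub>M MW \<Otimes>\<^sub>M rad"
  proof -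
    have "(\<lambda>x. (snd x, snd (fst x) i)) \<in> AA \<Otimes>\<^sub>M MW \<rightarrow>\<^sub>M MW \<Otimes>\<^sub>M rad"
      using measurable_compose[OF measurable_fst rs_comp_meas[OF i]] by measurable
    then show ?thesis by (simp add: case_prod_beta')
  qed
  have "distr (Su i u) (MW \<Otimes>\<^sub>M rad) (\<lambda>(a, w). (w, snd a i)) =
     AA \<bind> (\<lambda>a. distr (distr (K (tr i (u, a))) (AA \<Otimes>\<^sub>M MW) (\<lambda>w. (a, w))) (MW \<Otimes>\<^sub>M rad) (\<lambda>(a, w). (w, snd a i)))"
    unfolding Su_def by (rule distr_bind[OF k AA.not_empty pm])
  also have "\<dots> = AA \<bind> (\<lambda>a. distr (K (tr i (u, a))) (MW \<Otimes>\<^sub>M rad) (\<lambda>w. (w, snd a i)))"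
  proof (rule bind_cong[OF refl])
    fix a assume a: "a \<in> space AA"
    have sp: "tr i (u, a) \<in> space Pn" using tr_space[OF i] u a by (simp add: space_pair_measure)
    have sK: "sets (K (tr i (u, a))) = sets MW" using K_prob[OF sp] by simp
    have "(\<lambda>w. (a, w)) \<in> MW \<rightarrow>\<^sub>M AA \<Otimes>\<^sub>M MW" using a by simp
    then have f: "(\<lambda>w. (a, w)) \<in> K (tr i (u, a)) \<rightarrow>\<^sub>M AA \<Otimes>\<^sub>M MW"
      using measurable_cong_sets[OF sK refl] by blast
    show "distr (distr (K (tr i (u, a))) (AA \<Otimes>\<^sub>M MW) (\<lambda>w. (a, w))) (MW \<Otimes>\<^sub>M rad) (\<lambda>(a, w). (w, snd a i))
        = distr (K (tr i (u, a))) (MW \<Otimes>\<^sub>M rad) (\<lambda>w. (w, snd a i))"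
      by (subst distr_distr[OF pm f]) (simp add: comp_def)
  qed
  also have "\<dots> = cond_WR \<xi> MW K n i u" by (rule cond_WR_eq[OF i u, symmetric])
  finally show ?thesis .
qed

definition FF :: "nat \<Rightarrow> ((nat \<Rightarrow> 'z) \<times> 'w) \<times> 'z \<Rightarrow> real" where
  "FF i = (\<lambda>((zs, w), z). loss w z - loss w (zs i))"

lemma FF_meas[measurable]: assumes i: "i < n" shows "FF i \<in> borel_measurable NN"
proof -
  have c: "(\<lambda>x. fst (fst x) i) \<in> NN \<rightarrow>\<^sub>M \<xi>"
    using measurable_compose[OF measurable_compose[OF measurable_fst measurable_fst] measurable_component_singleton[of i "{..<n}" "\<lambda>_. \<xi>"]] i by simp
  have "(\<lambda>x. loss (snd (fst x)) (snd x) - loss (snd (fst x)) (fst (fst x) i)) \<in> borel_measurable NN"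
    using loss_meas[of "\<lambda>x. snd (fst x)" NN "\<lambda>x. snd x"] loss_meas[OF _ c, of "\<lambda>x. snd (fst x)"] by measurable
  then show ?thesis unfolding FF_def by (simp add: case_prod_beta')
qed

lemma FF_Psi: assumes i: "i < n"
  shows "FF i (Psi i ((u, a), w)) = H u (w, snd a i)"
  using i unfolding FF_def Psi_def H_def tr_def test_def train_def by simp

lemma partII:
  assumes i: "i < n"
    and int5: "integrable (JJ \<Otimes>\<^sub>M \<xi>) (\<lambda>(p, z). loss (snd p) z)"
    and int6: "integrable JJ (\<lambda>p. loss (snd p) (fst p i))"
  shows "integrable X2 (\<lambda>u. integral\<^sup>L (cond_WR \<xi> MW K n i u) (H u))"
    and "(\<integral>u. integral\<^sup>L (cond_WR \<xi> MW K n i u) (H u) \<partial>X2) = (\<integral>p. pop_loss \<xi> loss (snd p) - loss (snd p) (fst p i) \<partial>JJ)"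
proof -
  interpret J: prob_space JJ using JJ_prob by simp
  interpret xi: prob_space \<xi> by (rule xi)
  interpret X2: prob_space X2 by (rule X2_prob)
  interpret JX: pair_prob_space JJ \<xi> ..
  have sJ: "sets JJ = sets (Pn \<Otimes>\<^sub>M MW)" using JJ_prob by simp
  have sJX: "sets (JJ \<Otimes>\<^sub>M \<xi>) = sets NN" using sJ by (intro sets_pair_measure_cong) auto
  have FFm: "FF i \<in> borel_measurable (JJ \<Otimes>\<^sub>M \<xi>)" using FF_meas[OF i] sJX by (simp cong: measurable_cong_sets)
  have l1m: "(\<lambda>(p, z). loss (snd p) z) \<in> borel_measurable (JJ \<Otimes>\<^sub>M \<xi>)" using int5 by auto
  have l2m[measurable]: "(\<lambda>p. loss (snd p) (fst p i)) \<in> borel_measurable JJ" using int6 by auto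
  have int6': "integrable (JJ \<Otimes>\<^sub>M \<xi>) (\<lambda>x. loss (snd (fst x)) (fst (fst x) i))"
  proof -
    have "integrable (distr (JJ \<Otimes>\<^sub>M \<xi>) JJ fst) (\<lambda>p. loss (snd p) (fst p i))"
      using int6 by (simp add: xi.distr_pair_fst)
    then show ?thesis by (subst (asm) integrable_distr_eq) auto
  qed
  have FFint: "integrable (JJ \<Otimes>\<^sub>M \<xi>) (FF i)"
  proof -
    have "integrable (JJ \<Otimes>\<^sub>M \<xi>) (\<lambda>x. (\<lambda>(p, z). loss (snd p) z) x - loss (snd (fst x)) (fst (fst x) i))"
      using int5 int6' by (rule Bochner_Integration.integrable_diff)
    then show ?thesis unfolding FF_def by (simp add: case_prod_beta')
  qed
  have e: "integral\<^sup>L (JJ \<Otimes>\<^sub>M \<xi>) (FF i) = (\<integral>p. pop_loss \<xi> loss (snd p) - loss (snd p) (fst p i) \<partial>JJ)"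
  proof -
    have "integral\<^sup>L (JJ \<Otimes>\<^sub>M \<xi>) (FF i) = (\<integral>p. \<integral>z. FF i (p, z) \<partial>\<xi> \<partial>JJ)"
      by (rule JX.integral_fst'[OF FFint, symmetric])
    also have "\<dots> = (\<integral>p. pop_loss \<xi> loss (snd p) - loss (snd p) (fst p i) \<partial>JJ)"
    proof (rule integral_cong_AE)
      show "(\<lambda>p. \<integral>z. FF i (p, z) \<partial>\<xi>) \<in> borel_measurable JJ"
        using FFm by (intro xi.borel_measurable_lebesgue_integral) (simp add: case_prod_beta')
      have "(\<lambda>p. \<integral>z. loss (snd p) z \<partial>\<xi>) \<in> borel_measurable JJ"
        using l1m by (intro xi.borel_measurable_lebesgue_integral) (simp add: case_prod_beta')
      then show "(\<lambda>p. pop_loss \<xi> loss (snd p) - loss (snd p) (fst p i)) \<in> borel_measurable JJ"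
        unfolding pop_loss_def by measurable
      show "AE p in JJ. (\<integral>z. FF i (p, z) \<partial>\<xi>) = pop_loss \<xi> loss (snd p) - loss (snd p) (fst p i)"
        using JX.AE_integrable_fst'[OF int5]
      proof eventually_elim
        case (elim p)
        then have "integrable \<xi> (\<lambda>z. loss (snd p) z)" by simp
        then show ?case unfolding FF_def pop_loss_def
          by (cases p) (simp add: Bochner_Integration.integral_diff xi.prob_space)
      qed
    qed
    finally show ?thesis .
  qed
  have PsiM: "distr (SS i) NN (Psi i) = JJ \<Otimes>\<^sub>M \<xi>" by (rule claimM[OF i])
  have sSS: "sets (SS i) = sets Om2" using SS_prob[OF i] by simp
  have Psim: "Psi i \<in> SS i \<rightarrow>\<^sub>M NN" using Psi_meas[OF i] measurable_cong_sets[OF sSS refl] by blast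
  have intS: "integrable (SS i) (\<lambda>x. FF i (Psi i x))"
    using FFint unfolding PsiM[symmetric] by (subst (asm) integrable_distr_eq[OF Psim FF_meas[OF i]])
  have eS: "integral\<^sup>L (JJ \<Otimes>\<^sub>M \<xi>) (FF i) = integral\<^sup>L (SS i) (\<lambda>x. FF i (Psi i x))"
    unfolding PsiM[symmetric] by (rule integral_distr[OF Psim FF_meas[OF i]])
  have FPm: "(\<lambda>x. FF i (Psi i x)) \<in> borel_measurable Om2" using Psi_meas[OF i] FF_meas[OF i] by measurable
  have bind_int: "integrable X2 (\<lambda>u. \<integral>x. FF i (Psi i x) \<partial>distr (Su i u) Om2 (\<lambda>(a, w). ((u, a), w)))"
    and bind_eq: "integral\<^sup>L (SS i) (\<lambda>x. FF i (Psi i x)) = (\<integral>u. \<integral>x. FF i (Psi i x) \<partial>distr (Su i u) Om2 (\<lambda>(a, w). ((u, a), w)) \<partial>X2)"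
    using integral_bind_int[OF SS_kern[OF i] FPm X2_prob intS[unfolded SS_def]] unfolding SS_def by auto
  have inner: "(\<integral>x. FF i (Psi i x) \<partial>distr (Su i u) Om2 (\<lambda>(a, w). ((u, a), w))) = integral\<^sup>L (cond_WR \<xi> MW K n i u) (H u)"
    if u: "u \<in> space X2" for u
  proof -
    have sSu: "sets (Su i u) = sets (AA \<Otimes>\<^sub>M MW)"
      using measurable_space[OF Su_meas[OF i] u] by (simp add: space_prob_algebra)
    have m: "(\<lambda>(a, w). ((u, a), w)) \<in> Su i u \<rightarrow>\<^sub>M Om2"
    proof -
      have "(\<lambda>(a, w). ((u, a), w)) \<in> AA \<Otimes>\<^sub>M MW \<rightarrow>\<^sub>M Om2" using u by measurable
      then show ?thesis using measurable_cong_sets[OF sSu refl] by blast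
    qed
    have pm: "(\<lambda>(a, w). (w, snd a i)) \<in> Su i u \<rightarrow>\<^sub>M MW \<Otimes>\<^sub>M rad"
    proof -
      have "(\<lambda>x. (snd x, snd (fst x) i)) \<in> AA \<Otimes>\<^sub>M MW \<rightarrow>\<^sub>M MW \<Otimes>\<^sub>M rad"
        using measurable_compose[OF measurable_fst rs_comp_meas[OF i]] by measurable
      then have "(\<lambda>x. (snd x, snd (fst x) i)) \<in> Su i u \<rightarrow>\<^sub>M MW \<Otimes>\<^sub>M rad"
        using measurable_cong_sets[OF sSu refl] by blast
      then show ?thesis by (simp add: case_prod_beta')
    qed
    have "(\<integral>x. FF i (Psi i x) \<partial>distr (Su i u) Om2 (\<lambda>(a, w). ((u, a), w))) = (\<integral>x. FF i (Psi i ((\<lambda>(a, w). ((u, a), w)) x)) \<partial>Su i u)"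
      by (rule integral_distr[OF m FPm])
    also have "\<dots> = (\<integral>x. H u ((\<lambda>(a, w). (w, snd a i)) x) \<partial>Su i u)"
      by (intro Bochner_Integration.integral_cong refl) (auto simp: FF_Psi[OF i])
    also have "\<dots> = integral\<^sup>L (distr (Su i u) (MW \<Otimes>\<^sub>M rad) (\<lambda>(a, w). (w, snd a i))) (H u)"
      by (rule integral_distr[OF pm Hm[OF u], symmetric])
    also have "\<dots> = integral\<^sup>L (cond_WR \<xi> MW K n i u) (H u)" unfolding CW_Su[OF i u] ..
    finally show ?thesis .
  qed
  show "integrable X2 (\<lambda>u. integral\<^sup>L (cond_WR \<xi> MW K n i u) (H u))"
  proof -
    have "integrable X2 (\<lambda>u. \<integral>x. FF i (Psi i x) \<partial>distr (Su i u) Om2 (\<lambda>(a, w). ((u, a), w)))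
        \<longleftrightarrow> integrable X2 (\<lambda>u. integral\<^sup>L (cond_WR \<xi> MW K n i u) (H u))"
      apply (rule Bochner_Integration.integrable_cong)
      apply (rule refl)
      apply (simp add: inner)
      done
    then show ?thesis using bind_int by simp
  qed
  have "(\<integral>u. integral\<^sup>L (cond_WR \<xi> MW K n i u) (H u) \<partial>X2) = (\<integral>u. \<integral>x. FF i (Psi i x) \<partial>distr (Su i u) Om2 (\<lambda>(a, w). ((u, a), w)) \<partial>X2)"
    by (intro Bochner_Integration.integral_cong refl) (simp add: inner)
  also have "\<dots> = (\<integral>p. pop_loss \<xi> loss (snd p) - loss (snd p) (fst p i) \<partial>JJ)"
    using bind_eq eS e by simp
  finally show "(\<integral>u. integral\<^sup>L (cond_WR \<xi> MW K n i u) (H u) \<partial>X2) = (\<integral>p. pop_loss \<xi> loss (snd p) - loss (snd p) (fst p i) \<partial>JJ)" .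
qed

end


lemma ereal_integral_le_nn:
  fixes g :: "'a \<Rightarrow> real"
  assumes g: "integrable M g"
  shows "ereal (integral\<^sup>L M g) \<le> enn2ereal (\<integral>\<^sup>+x. ennreal (g x) \<partial>M)"
proof -
  have fin: "(\<integral>\<^sup>+x. ennreal (g x) \<partial>M) \<noteq> \<infinity>" using g unfolding real_integrable_def by auto
  have "integral\<^sup>L M g \<le> enn2real (\<integral>\<^sup>+x. ennreal (g x) \<partial>M)"
    unfolding real_lebesgue_integral_def[OF g] by simp
  then show ?thesis using enn2ereal_fin[OF fin] by simp
qed

context setting begin

lemma part1:
  assumes i: "i < n"
    and int5: "integrable (JJ \<Otimes>\<^sub>M \<xi>) (\<lambda>(p, z). loss (snd p) z)"
    and int6: "integrable JJ (\<lambda>p. loss (snd p) (fst p i))"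
  shows "ereal (\<integral>p. pop_loss \<xi> loss (snd p) - loss (snd p) (fst p i) \<partial>JJ) \<le> eexp X2 (B i)"
proof -
  let ?g = "\<lambda>u. integral\<^sup>L (cond_WR \<xi> MW K n i u) (H u)"
  have gint: "integrable X2 ?g" and geq: "(\<integral>u. ?g u \<partial>X2) = (\<integral>p. pop_loss \<xi> loss (snd p) - loss (snd p) (fst p i) \<partial>JJ)"
    using partII[OF i int5 int6] by auto
  have pw: "ennreal (?g u) \<le> e2ennreal (B i u)" if u: "u \<in> space X2" for u
  proof -
    have "ereal (?g u) \<le> B i u"
    proof (cases "integrable (cond_WR \<xi> MW K n i u) (H u)")
      case True then show ?thesis by (rule B_bound[OF i u])
    next
      case False then show ?thesis using B_nonneg[OF i u] by (simp add: not_integrable_integral_eq zero_ereal_def)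
    qed
    from e2ennreal_mono[OF this] show ?thesis by simp
  qed
  have "ereal (\<integral>u. ?g u \<partial>X2) \<le> enn2ereal (\<integral>\<^sup>+u. ennreal (?g u) \<partial>X2)"
    by (rule ereal_integral_le_nn[OF gint])
  also have "\<dots> \<le> enn2ereal (\<integral>\<^sup>+u. e2ennreal (B i u) \<partial>X2)"
    using pw by (simp add: less_eq_ennreal.rep_eq[symmetric] nn_integral_mono)
  also have "\<dots> = eexp X2 (B i)"
    using B_nonneg[OF i] by (intro eexp_nonneg[symmetric]) auto
  finally show ?thesis using geq by simp
qed

lemma gen_eq:
  assumes int5: "integrable (JJ \<Otimes>\<^sub>M \<xi>) (\<lambda>(p, z). loss (snd p) z)"
    and int6: "\<And>i. i < n \<Longrightarrow> integrable JJ (\<lambda>p. loss (snd p) (fst p i))"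
  shows "gen \<xi> MW K n loss = (\<Sum>i<n. \<integral>p. pop_loss \<xi> loss (snd p) - loss (snd p) (fst p i) \<partial>JJ) / real n"
proof -
  interpret J: prob_space JJ using JJ_prob by simp
  interpret xi: prob_space \<xi> by (rule xi)
  interpret JX: pair_prob_space JJ \<xi> ..
  have popint: "integrable JJ (\<lambda>p. pop_loss \<xi> loss (snd p))"
    using JX.integrable_fst'[OF int5] unfolding pop_loss_def by simp
  have fi: "integrable JJ (\<lambda>p. pop_loss \<xi> loss (snd p) - loss (snd p) (fst p i))" if "i < n" for i
    using popint int6[OF that] by (rule Bochner_Integration.integrable_diff)
  have "gen \<xi> MW K n loss = (\<integral>p. (\<Sum>i<n. pop_loss \<xi> loss (snd p) - loss (snd p) (fst p i)) / real n \<partial>JJ)"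
    unfolding gen_def emp_loss_def using npos
    by (intro Bochner_Integration.integral_cong refl) (simp add: sum_subtractf field_simps)
  also have "\<dots> = (\<integral>p. (\<Sum>i<n. pop_loss \<xi> loss (snd p) - loss (snd p) (fst p i)) \<partial>JJ) / real n"
    by simp
  also have "(\<integral>p. (\<Sum>i<n. pop_loss \<xi> loss (snd p) - loss (snd p) (fst p i)) \<partial>JJ) = (\<Sum>i<n. \<integral>p. pop_loss \<xi> loss (snd p) - loss (snd p) (fst p i) \<partial>JJ)"
    using fi by (intro Bochner_Integration.integral_sum) auto
  finally show ?thesis .
qed

lemma main:
  assumes int5: "integrable (JJ \<Otimes>\<^sub>M \<xi>) (\<lambda>(p, z). loss (snd p) z)"
    and int6: "\<And>i. i < n \<Longrightarrow> integrable JJ (\<lambda>p. loss (snd p) (fst p i))"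
  shows "ereal (gen \<xi> MW K n loss)
           \<le> (\<Sum>i<n. eexp (\<xi> \<Otimes>\<^sub>M \<xi>)
                 (\<lambda>u. inv_conj (cgf (law_G \<xi> MW K n loss i u)) (cmi_pt \<xi> MW K n i u))) / ereal (real n)
       \<and> (\<Sum>i<n. eexp (\<xi> \<Otimes>\<^sub>M \<xi>)
                 (\<lambda>u. inv_conj (cgf (law_G \<xi> MW K n loss i u)) (cmi_pt \<xi> MW K n i u))) / ereal (real n)
           \<le> (\<Sum>i<n. inv_conj (\<lambda>t. eexp (\<xi> \<Otimes>\<^sub>M \<xi>) (\<lambda>u. cgf (law_G \<xi> MW K n loss i u) t))
                                (cmi \<xi> MW K n i)) / ereal (real n)"
proof -
  have Beq: "(\<lambda>u. inv_conj (cgf (law_G \<xi> MW K n loss i u)) (cmi_pt \<xi> MW K n i u)) = B i" for i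
    unfolding B_def by (rule ext) simp
  have np: "0 < ereal (real n)" using npos by simp
  have "ereal (gen \<xi> MW K n loss) = ereal (\<Sum>i<n. \<integral>p. pop_loss \<xi> loss (snd p) - loss (snd p) (fst p i) \<partial>JJ) / ereal (real n)"
    using gen_eq[OF int5 int6] npos by simp
  also have "\<dots> \<le> (\<Sum>i<n. eexp X2 (B i)) / ereal (real n)"
  proof (rule ereal_divide_right_mono[OF _ np])
    show "ereal (\<Sum>i<n. \<integral>p. pop_loss \<xi> loss (snd p) - loss (snd p) (fst p i) \<partial>JJ) \<le> (\<Sum>i<n. eexp X2 (B i))"
      unfolding sum_ereal[symmetric] using part1[OF _ int5 int6] by (intro sum_mono) auto
  qed
  finally have 1: "ereal (gen \<xi> MW K n loss) \<le> (\<Sum>i<n. eexp X2 (B i)) / ereal (real n)" .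
  have 2: "(\<Sum>i<n. eexp X2 (B i)) / ereal (real n) \<le> (\<Sum>i<n. inv_conj (\<lambda>t. eexp (\<xi> \<Otimes>\<^sub>M \<xi>) (\<lambda>u. cgf (law_G \<xi> MW K n loss i u) t))
                                (cmi \<xi> MW K n i)) / ereal (real n)"
    using part3 by (intro ereal_divide_right_mono[OF _ np] sum_mono) auto
  show ?thesis unfolding Beq using 1 2 by simp
qed

end

theorem theorem5:
  fixes \<xi> :: "'z measure" and MW :: "'w measure"
    and K :: "(nat \<Rightarrow> 'z) \<Rightarrow> 'w measure" and loss :: "'w \<Rightarrow> 'z \<Rightarrow> real" and n :: nat
  assumes "prob_space \<xi>"
    and "n > 0"
    and "K \<in> measurable (PiM {..<n} (\<lambda>_. \<xi>)) (prob_algebra MW)"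
    and "(\<lambda>(w, z). loss w z) \<in> borel_measurable (MW \<Otimes>\<^sub>M \<xi>)"
    and "integrable (joint_ZW \<xi> MW K n \<Otimes>\<^sub>M \<xi>) (\<lambda>(p, z). loss (snd p) z)"
    and "\<And>i. i < n \<Longrightarrow> integrable (joint_ZW \<xi> MW K n) (\<lambda>p. loss (snd p) (fst p i))"
  shows "ereal (gen \<xi> MW K n loss)
           \<le> (\<Sum>i<n. eexp (\<xi> \<Otimes>\<^sub>M \<xi>)
                 (\<lambda>u. inv_conj (cgf (law_G \<xi> MW K n loss i u)) (cmi_pt \<xi> MW K n i u))) / ereal (real n)
       \<and> (\<Sum>i<n. eexp (\<xi> \<Otimes>\<^sub>M \<xi>)
                 (\<lambda>u. inv_conj (cgf (law_G \<xi> MW K n loss i u)) (cmi_pt \<xi> MW K n i u))) / ereal (real n)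
           \<le> (\<Sum>i<n. inv_conj (\<lambda>t. eexp (\<xi> \<Otimes>\<^sub>M \<xi>) (\<lambda>u. cgf (law_G \<xi> MW K n loss i u) t))
                                (cmi \<xi> MW K n i)) / ereal (real n)"
proof -
  interpret setting \<xi> MW K loss n using assms(1-4) by (intro setting.intro)
  show ?thesis using main[OF assms(5,6)] by blast
qed

end
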